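(* Let $M\ge3$ be an integer and $p\in[2,\infty]$. For every continuous $M$-linear form $T:X_p\times X_\infty\times\cdots\times X_\infty\to\mathbb{R}$, \[ \left(\sum_{i_1=1}^\infty\left(\sum_{i_2,\dots,i_M=1}^\infty|T(e_{i_1},\dots,e_{i_M})|^2\right)^{\frac12\cdot\frac{p}{p-1}}\right)^{\frac{p-1}{p}}\le\left(\mathrm{A}_{\frac{p}{p-1}}\right)^{M-1}\|T\|. \] Hence the optimal constant $C_{(M),p}$ satisfies $C_{(M),p}\le(\mathrm{A}_{p/(p-1)})^{M-1}$.
   Context: Scalars are real. $X_p=\ell_p$ for $1\le p<\infty$, $X_\infty=c_0$, $(e_k)$ canonical unit vectors. For a continuous $M$-linear form $T:X_{p_1}\times\cdots\times X_{p_M}\to\mathbb{R}$, $\|T\|=\sup\{|T(x^{(1)},\dots,x^{(M)})|:\|x^{(k)}\|_{X_{p_k}}\le1\}$. $p/(p-1)$ is read as $1$ when $p=\infty$. $r_j(t)=\operatorname{sign}(\sin(2^j\pi t))$ are the Rademacher functions, and for $0<r<\infty$, $\mathrm{A}_r$ is the optimal constant such that $\left(\sum_{j=1}^n|a_j|^2\right)^{1/2}\le \mathrm{A}_r\left(\int_0^1|\sum_{j=1}^n a_jr_j(t)|^rdt\right)^{1/r}$ for all $n$ and real $a_j$. $C_{(M),p}$ denotes the optimal constant $C$ in the displayed inequality (with $C$ in place of $(\mathrm{A}_{p/(p-1)})^{M-1}$) over all such $T$. *)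

theory Defs
  imports "HOL-Analysis.Analysis"
begin

(* Sequences are functions nat => real; index 0 plays the role of index 1. *)

definition unit_vec :: "nat \<Rightarrow> nat \<Rightarrow> real" where
  "unit_vec n = (\<lambda>m. if m = n then 1 else 0)"

(* X_p: ell_p for finite p >= 1, c_0 for p = \<infinity> *)
definition Xspace :: "ereal \<Rightarrow> (nat \<Rightarrow> real) set" where
  "Xspace p = (if p = \<infinity> then {x. x \<longlonglongrightarrow> 0}
               else {x. summable (\<lambda>n. \<bar>x n\<bar> powr real_of_ereal p)})"

definition Xnorm :: "ereal \<Rightarrow> (nat \<Rightarrow> real) \<Rightarrow> real" where
  "Xnorm p x = (if p = \<infinity> then (SUP n. \<bar>x n\<bar>)
               else (\<Sum>n. \<bar>x n\<bar> powr real_of_ereal p) powr (1 / real_of_ereal p))"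

definition conj_exp :: "ereal \<Rightarrow> real" where
  "conj_exp p = (if p = \<infinity> then 1 else real_of_ereal p / (real_of_ereal p - 1))"

(* Domain of an M-linear form on X_{ps 0} x ... x X_{ps (M-1)}: M-tuples of
   sequences, encoded as functions k \<mapsto> x k, with x k = 0 for k >= M. *)
definition mdom :: "nat \<Rightarrow> (nat \<Rightarrow> ereal) \<Rightarrow> (nat \<Rightarrow> nat \<Rightarrow> real) set" where
  "mdom M ps = {x. (\<forall>k<M. x k \<in> Xspace (ps k)) \<and> (\<forall>k\<ge>M. x k = (\<lambda>_. 0))}"

definition multilinear_form :: "nat \<Rightarrow> (nat \<Rightarrow> ereal) \<Rightarrow> ((nat \<Rightarrow> nat \<Rightarrow> real) \<Rightarrow> real) \<Rightarrow> bool" where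
  "multilinear_form M ps T \<longleftrightarrow>
     (\<forall>x\<in>mdom M ps. \<forall>k<M. \<forall>u\<in>Xspace (ps k). \<forall>v\<in>Xspace (ps k). \<forall>a b :: real.
        T (x(k := (\<lambda>n. a * u n + b * v n))) = a * T (x(k := u)) + b * T (x(k := v)))"

definition continuous_form :: "nat \<Rightarrow> (nat \<Rightarrow> ereal) \<Rightarrow> ((nat \<Rightarrow> nat \<Rightarrow> real) \<Rightarrow> real) \<Rightarrow> bool" where
  "continuous_form M ps T \<longleftrightarrow>
     (\<forall>x\<in>mdom M ps. \<forall>\<epsilon>>0. \<exists>\<delta>>0. \<forall>y\<in>mdom M ps.
        (\<forall>k<M. Xnorm (ps k) (\<lambda>n. y k n - x k n) < \<delta>) \<longrightarrow> \<bar>T y - T x\<bar> < \<epsilon>)"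

definition form_norm :: "nat \<Rightarrow> (nat \<Rightarrow> ereal) \<Rightarrow> ((nat \<Rightarrow> nat \<Rightarrow> real) \<Rightarrow> real) \<Rightarrow> real" where
  "form_norm M ps T = (SUP x\<in>{x\<in>mdom M ps. \<forall>k<M. Xnorm (ps k) (x k) \<le> 1}. \<bar>T x\<bar>)"

definition eval_units :: "nat \<Rightarrow> ((nat \<Rightarrow> nat \<Rightarrow> real) \<Rightarrow> real) \<Rightarrow> (nat \<Rightarrow> nat) \<Rightarrow> real" where
  "eval_units M T i = T (\<lambda>k. if k < M then unit_vec (i k) else (\<lambda>_. 0))"

definition rademacher :: "nat \<Rightarrow> real \<Rightarrow> real" where
  "rademacher j t = sgn (sin (2 ^ j * pi * t))"

definition khintchine_A :: "real \<Rightarrow> real" where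
  "khintchine_A r = Inf {C. \<forall>(n::nat) (a::nat \<Rightarrow> real).
     sqrt (\<Sum>j=1..n. (a j)\<^sup>2)
       \<le> C * (integral {0..1} (\<lambda>t. \<bar>\<Sum>j=1..n. a j * rademacher j t\<bar> powr r)) powr (1 / r)}"

definition ennpowr :: "ennreal \<Rightarrow> real \<Rightarrow> ennreal" where
  "ennpowr x a = (if x = top then top else ennreal (enn2real x powr a))"

definition mixed_sum :: "nat \<Rightarrow> real \<Rightarrow> ((nat \<Rightarrow> nat \<Rightarrow> real) \<Rightarrow> real) \<Rightarrow> ennreal" where
  "mixed_sum M q T = ennpowr
     (\<Sum>\<^sub>\<infinity> i1\<in>(UNIV::nat set). ennpowr
        (\<Sum>\<^sub>\<infinity> i\<in>PiE {1..<M} (\<lambda>_. UNIV :: nat set). ennreal ((eval_units M T (i(0 := i1)))\<^sup>2))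
        (q / 2))
     (1 / q)"

end

theory Submission
  imports Defs
begin

definition sv :: "nat \<Rightarrow> nat \<Rightarrow> nat \<Rightarrow> real" where
  "sv n k = (\<lambda>j. if j < n then (-1) ^ (k div 2^(n-1-j)) else 0)"

definition Ev :: "nat \<Rightarrow> ((nat \<Rightarrow> real) \<Rightarrow> real) \<Rightarrow> real" where
  "Ev n F = (\<Sum>k<2^n. F (sv n k)) / 2^n"

lemma sum_lessThan_double:
  fixes G :: "nat \<Rightarrow> real"
  shows "(\<Sum>k<2*m. G k) = (\<Sum>k<m. G (2*k) + G (2*k+1))"
  by (induction m) (simp_all add: algebra_simps)

lemma sv_Suc_even: "sv (Suc n) (2*k) = (sv n k)(n := 1)"
proof
  fix j show "sv (Suc n) (2*k) j = ((sv n k)(n := 1)) j"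
  proof (cases "j < n")
    case True
    then have e: "n - j = Suc (n - Suc j)" by simp
    have "2*k div 2^(Suc (n - Suc j)) = k div 2^(n - Suc j)" by (simp add: div_mult2_eq)
    then show ?thesis using True by (simp add: sv_def e)
  next
    case False
    show ?thesis
    proof (cases "j = n")
      case True then show ?thesis by (simp add: sv_def)
    next
      case False
      with \<open>\<not> j < n\<close> show ?thesis by (simp add: sv_def)
    qed
  qed
qed

lemma sv_Suc_odd: "sv (Suc n) (Suc (2*k)) = (sv n k)(n := -1)"
proof
  fix j show "sv (Suc n) (Suc (2*k)) j = ((sv n k)(n := -1)) j"
  proof (cases "j < n")
    case True
    then have e: "n - j = Suc (n - Suc j)" by simp
    have "Suc (2*k) div 2^(Suc (n - Suc j)) = k div 2^(n - Suc j)" by (simp add: div_mult2_eq)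
    then show ?thesis using True by (simp add: sv_def e)
  next
    case False
    show ?thesis
    proof (cases "j = n")
      case True then show ?thesis by (simp add: sv_def)
    next
      case False
      with \<open>\<not> j < n\<close> show ?thesis by (simp add: sv_def)
    qed
  qed
qed

lemma Ev_Suc: "Ev (Suc n) F = Ev n (\<lambda>s. (F (s(n := 1)) + F (s(n := -1))) / 2)"
proof -
  have "(\<Sum>k<2^Suc n. F (sv (Suc n) k)) = (\<Sum>k<2^n. F (sv (Suc n) (2*k)) + F (sv (Suc n) (2*k+1)))"
    by (simp add: sum_lessThan_double)
  also have "\<dots> = (\<Sum>k<2^n. F ((sv n k)(n := 1)) + F ((sv n k)(n := -1)))"
    by (simp add: sv_Suc_even sv_Suc_odd)
  finally show ?thesis unfolding Ev_def by (simp add: sum_divide_distrib)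
qed

lemma Ev_add: "Ev n (\<lambda>s. F s + G s) = Ev n F + Ev n G"
  by (simp add: Ev_def sum.distrib add_divide_distrib)
lemma Ev_cmult: "Ev n (\<lambda>s. c * F s) = c * Ev n F"
  by (simp add: Ev_def sum_distrib_left)
lemma Ev_const: "Ev n (\<lambda>s. c) = c"
  by (simp add: Ev_def)
lemma Ev_mono: "(\<And>s. F s \<le> G s) \<Longrightarrow> Ev n F \<le> Ev n G"
  unfolding Ev_def by (intro divide_right_mono sum_mono) auto
lemma Ev_nonneg: "(\<And>s. 0 \<le> F s) \<Longrightarrow> 0 \<le> Ev n F"
  using Ev_mono[of "\<lambda>_. 0" F n] by (simp add: Ev_const)

lemma sum_upd_lt: fixes a s :: "nat \<Rightarrow> real" and n j :: nat assumes "n\<le>j" shows "(\<Sum>i<n. a i * (s(j := c)) i) = (\<Sum>i<n. a i * s i)"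
proof (intro sum.cong refl)
  fix i assume "i \<in> {..<n}" then have "i < n" by simp
  then have "i \<noteq> j" using assms by linarith
  then show "a i * (s(j := c)) i = a i * s i" by simp
qed

lemma p2: "(((x::real) + y*1)^2 + (x + y*(-1))^2)/2 = x^2 + y^2"
  by (simp add: power2_eq_square algebra_simps)
lemma p4: "(((x::real) + y*1)^4 + (x + y*(-1))^4)/2 = x^4 + 6*y^2*x^2 + y^4"
  by (simp add: power4_eq_xxxx power2_eq_square algebra_simps)

lemma Ev_moments:
  fixes a :: "nat \<Rightarrow> real"
  shows "Ev n (\<lambda>s. (\<Sum>j<n. a j * s j)^2) = (\<Sum>j<n. (a j)^2)
       \<and> Ev n (\<lambda>s. (\<Sum>j<n. a j * s j)^4) \<le> 3 * (\<Sum>j<n. (a j)^2)^2"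
proof (induction n)
  case 0 then show ?case by (simp add: Ev_def)
next
  case (Suc n)
  let ?X = "\<lambda>s. (\<Sum>j<n. a j * s j)"
  have e: "\<And>s c. (\<Sum>j<Suc n. a j * (s(n := c)) j) = ?X s + a n * c"
    by (simp add: sum_upd_lt)
  have m2: "Ev (Suc n) (\<lambda>s. (\<Sum>j<Suc n. a j * s j)^2) = Ev n (\<lambda>s. ?X s ^2 + (a n)^2)"
    unfolding Ev_Suc e p2 ..
  have m4: "Ev (Suc n) (\<lambda>s. (\<Sum>j<Suc n. a j * s j)^4) = Ev n (\<lambda>s. ?X s ^4 + 6 * (a n)^2 * ?X s^2 + (a n)^4)"
    unfolding Ev_Suc e p4 ..
  have A: "Ev n (\<lambda>s. ?X s ^2 + (a n)^2) = (\<Sum>j<n. (a j)^2) + (a n)^2"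
    using Suc by (simp add: Ev_add Ev_const)
  have B: "Ev n (\<lambda>s. ?X s ^4 + 6 * (a n)^2 * ?X s^2 + (a n)^4)
      = Ev n (\<lambda>s. ?X s ^4) + 6 * (a n)^2 * (\<Sum>j<n. (a j)^2) + (a n)^4"
    using Suc by (simp add: Ev_add Ev_const Ev_cmult)
  have "Ev n (\<lambda>s. ?X s ^4) + 6 * (a n)^2 * (\<Sum>j<n. (a j)^2) + (a n)^4
        \<le> 3 * ((\<Sum>j<n. (a j)^2) + (a n)^2)^2"
  proof -
    have "3 * ((\<Sum>j<n. (a j)^2) + (a n)^2)^2 = 3 * (\<Sum>j<n. (a j)^2)^2 + 6 * (a n)^2 * (\<Sum>j<n. (a j)^2) + 3 * (a n)^4"
      by (simp add: power2_eq_square power4_eq_xxxx algebra_simps)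
    moreover have "0 \<le> (a n)^4" by simp
    ultimately show ?thesis using Suc.IH by linarith
  qed
  note ineq = this
  have sS: "(\<Sum>j<Suc n. (a j)^2) = (\<Sum>j<n. (a j)^2) + (a n)^2" by simp
  have c1: "Ev (Suc n) (\<lambda>s. (\<Sum>j<Suc n. a j * s j)^2) = (\<Sum>j<Suc n. (a j)^2)"
    unfolding sS using m2 A by (rule trans)
  have c2: "Ev (Suc n) (\<lambda>s. (\<Sum>j<Suc n. a j * s j)^4) \<le> 3 * (\<Sum>j<Suc n. (a j)^2)^2"
    unfolding sS m4 B by (rule ineq)
  from c1 c2 show ?case by (rule conjI)
qed

lemma powr_convex0':
  assumes r: "1 \<le> r"
  shows "convex_on {0..} (\<lambda>x::real. x powr r)"
proof (rule convex_onI)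
  show "convex {0::real..}" by (simp add: convex_real_interval)
  fix t x y :: real
  assume t: "0 < t" "t < 1" and xy: "x \<in> {0..}" "y \<in> {0..}"
  show "((1 - t) *\<^sub>R x + t *\<^sub>R y) powr r \<le> (1 - t) * x powr r + t * y powr r"
  proof (cases "x = 0 \<or> y = 0")
    case False
    then have "x \<in> {0<..}" "y \<in> {0<..}" using xy by auto
    then show ?thesis using convex_onD[OF powr_convex[OF r], of t x y] t by simp
  next
    case True
    have k: "\<And>u z::real. 0 \<le> u \<Longrightarrow> u \<le> 1 \<Longrightarrow> 0 \<le> z \<Longrightarrow> (u * z) powr r \<le> u * z powr r"
    proof -
      fix u z :: real assume u: "0 \<le> u" "u \<le> 1" "0 \<le> z"
      have "(u*z) powr r = u powr r * z powr r" using u by (simp add: powr_mult)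
      also have "u powr r \<le> u powr 1"
        using u r by (intro powr_mono') auto
      then have "u powr r * z powr r \<le> u powr 1 * z powr r" using u by (intro mult_right_mono) auto
      also have "u powr 1 = u" using u by (cases "u = 0") auto
      finally show "(u * z) powr r \<le> u * z powr r" .
    qed
    show ?thesis using True xy t k[of t y] k[of "1-t" x] by auto
  qed
qed

definition nrm :: "real \<Rightarrow> 'a set \<Rightarrow> ('a \<Rightarrow> real) \<Rightarrow> real" where
  "nrm s Y v = (\<Sum>y\<in>Y. v y powr s) powr (1/s)"

lemma nrm_nonneg: "0 \<le> nrm s Y v" by (simp add: nrm_def)

lemma nrm_scale:
  assumes "1 \<le> s" "0 \<le> c" "\<And>y. y \<in> Y \<Longrightarrow> 0 \<le> v y"
  shows "nrm s Y (\<lambda>y. c * v y) = c * nrm s Y v"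
proof -
  have "(\<Sum>y\<in>Y. (c * v y) powr s) = c powr s * (\<Sum>y\<in>Y. v y powr s)"
    using assms by (simp add: powr_mult sum_distrib_left)
  then show ?thesis unfolding nrm_def using assms
    by (simp add: powr_mult powr_powr sum_nonneg)
qed

lemma nrm_zero_imp:
  assumes "finite Y" "1 \<le> s" "\<And>y. y \<in> Y \<Longrightarrow> 0 \<le> v y" "nrm s Y v = 0" "y \<in> Y"
  shows "v y = 0"
proof -
  have "(\<Sum>y\<in>Y. v y powr s) = 0" using assms(4) unfolding nrm_def
    by (simp add: sum_nonneg)
  then have "\<forall>y\<in>Y. v y powr s = 0" using assms by (subst (asm) sum_nonneg_eq_0_iff) auto
  then show ?thesis using assms(5) by simp
qed

lemma nrm_pow: "finite Y \<Longrightarrow> 1 \<le> s \<Longrightarrow> (\<And>y. y \<in> Y \<Longrightarrow> 0 \<le> v y) \<Longrightarrow> nrm s Y v powr s = (\<Sum>y\<in>Y. v y powr s)"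
  unfolding nrm_def by (simp add: powr_powr sum_nonneg)

lemma nrm_triangle:
  assumes fin: "finite Y" and s: "1 \<le> s" and v: "\<And>y. y \<in> Y \<Longrightarrow> 0 \<le> v y" and w: "\<And>y. y \<in> Y \<Longrightarrow> 0 \<le> w y"
  shows "nrm s Y (\<lambda>y. v y + w y) \<le> nrm s Y v + nrm s Y w"
proof -
  define a where "a = nrm s Y v"
  define b where "b = nrm s Y w"
  have a0: "0 \<le> a" "0 \<le> b" unfolding a_def b_def by (simp_all add: nrm_nonneg)
  show ?thesis
  proof (cases "a = 0 \<or> b = 0")
    case True
    then show ?thesis
    proof
      assume "a = 0"
      then have "\<And>y. y \<in> Y \<Longrightarrow> v y = 0" using nrm_zero_imp[of Y s v] fin s v unfolding a_def by blast
      then have "nrm s Y (\<lambda>y. v y + w y) = nrm s Y w" unfolding nrm_def by (intro arg_cong2[where f="(powr)"] sum.cong) auto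
      then show ?thesis using \<open>a = 0\<close> unfolding a_def b_def by simp
    next
      assume "b = 0"
      then have "\<And>y. y \<in> Y \<Longrightarrow> w y = 0" using nrm_zero_imp[of Y s w] fin s w unfolding b_def by blast
      then have "nrm s Y (\<lambda>y. v y + w y) = nrm s Y v" unfolding nrm_def by (intro arg_cong2[where f="(powr)"] sum.cong) auto
      then show ?thesis using \<open>b = 0\<close> unfolding a_def b_def by simp
    qed
  next
    case False
    then have ap: "0 < a" "0 < b" using a0 by auto
    define t where "t = b / (a + b)"
    have t: "0 < t" "t < 1" unfolding t_def using ap by (auto simp: field_simps)
    have pt: "\<And>y. y \<in> Y \<Longrightarrow> ((v y + w y) / (a + b)) powr s \<le> (1 - t) * (v y / a) powr s + t * (w y / b) powr s"
    proof -
      fix y assume y: "y \<in> Y"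
      have t1: "1 - t = a / (a + b)" unfolding t_def using ap by (simp add: field_simps)
      have "(1 - t) * (v y / a) = v y / (a + b)" unfolding t1 using ap by simp
      moreover have "t * (w y / b) = w y / (a + b)" unfolding t_def using ap by simp
      ultimately have "(v y + w y) / (a + b) = (1 - t) *\<^sub>R (v y / a) + t *\<^sub>R (w y / b)"
        by (simp add: add_divide_distrib)
      then show "((v y + w y) / (a + b)) powr s \<le> (1 - t) * (v y / a) powr s + t * (w y / b) powr s"
        using convex_onD[OF powr_convex0'[OF s], of t "v y / a" "w y / b"] t v[OF y] w[OF y] ap by simp
    qed
    have "(\<Sum>y\<in>Y. ((v y + w y) / (a + b)) powr s) \<le> (\<Sum>y\<in>Y. (1 - t) * (v y / a) powr s + t * (w y / b) powr s)"
      using pt by (rule sum_mono)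
    also have "\<dots> = (1 - t) * ((\<Sum>y\<in>Y. v y powr s) / a powr s) + t * ((\<Sum>y\<in>Y. w y powr s) / b powr s)"
      using ap v w by (simp add: sum.distrib sum_distrib_left powr_divide sum_divide_distrib)
    also have "(\<Sum>y\<in>Y. v y powr s) = a powr s" unfolding a_def using nrm_pow[OF fin s v] by simp
    also have "(\<Sum>y\<in>Y. w y powr s) = b powr s" unfolding b_def using nrm_pow[OF fin s w] by simp
    finally have "(\<Sum>y\<in>Y. ((v y + w y) / (a + b)) powr s) \<le> 1" using ap by simp
    moreover have "(\<Sum>y\<in>Y. ((v y + w y) / (a + b)) powr s) = (\<Sum>y\<in>Y. (v y + w y) powr s) / (a + b) powr s"
      using ap v w by (simp add: powr_divide sum_divide_distrib)
    ultimately have "(\<Sum>y\<in>Y. (v y + w y) powr s) \<le> (a + b) powr s" using ap by (simp add: divide_le_eq)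
    then have "(\<Sum>y\<in>Y. (v y + w y) powr s) powr (1/s) \<le> ((a + b) powr s) powr (1/s)"
      using s by (intro powr_mono2) (auto simp: sum_nonneg)
    then show ?thesis unfolding nrm_def[of s Y "\<lambda>y. v y + w y"] a_def[symmetric] b_def[symmetric]
      using ap s by (simp add: powr_powr)
  qed
qed

lemma minkowski_sum:
  assumes fY: "finite Y" and fP: "finite P" and s: "1 \<le> s"
    and g: "\<And>y k. y \<in> Y \<Longrightarrow> k \<in> P \<Longrightarrow> 0 \<le> g y k" and w: "\<And>k. k \<in> P \<Longrightarrow> 0 \<le> w k"
  shows "nrm s Y (\<lambda>y. \<Sum>k\<in>P. w k * g y k) \<le> (\<Sum>k\<in>P. w k * nrm s Y (\<lambda>y. g y k))"
  using fP g w
proof (induction P rule: finite_induct)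
  case empty then show ?case by (simp add: nrm_def)
next
  case (insert k P)
  have "nrm s Y (\<lambda>y. \<Sum>k\<in>insert k P. w k * g y k) = nrm s Y (\<lambda>y. w k * g y k + (\<Sum>k\<in>P. w k * g y k))"
    using insert by simp
  also have "\<dots> \<le> nrm s Y (\<lambda>y. w k * g y k) + nrm s Y (\<lambda>y. \<Sum>k\<in>P. w k * g y k)"
    using insert by (intro nrm_triangle[OF fY s]) (auto intro!: sum_nonneg)
  also have "nrm s Y (\<lambda>y. w k * g y k) = w k * nrm s Y (\<lambda>y. g y k)"
    using insert by (intro nrm_scale[OF s]) auto
  also have "nrm s Y (\<lambda>y. \<Sum>k\<in>P. w k * g y k) \<le> (\<Sum>k\<in>P. w k * nrm s Y (\<lambda>y. g y k))"
    using insert by auto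
  finally show ?case using insert by simp
qed

lemma sum_PiE_insert:
  assumes "x \<notin> S" "finite S" "\<And>i. finite (B i)"
  shows "(\<Sum>f\<in>PiE (insert x S) B. F f) = (\<Sum>y\<in>B x. \<Sum>g\<in>PiE S B. F (g(x := y)))"
proof -
  have "(\<Sum>f\<in>PiE (insert x S) B. F f) = (\<Sum>f\<in>(\<lambda>(y, g). g(x := y)) ` (B x \<times> PiE S B). F f)"
    by (simp add: PiE_insert_eq)
  also have "\<dots> = (\<Sum>(y,g)\<in>B x \<times> PiE S B. F (g(x := y)))"
    by (subst sum.reindex[OF inj_combinator[OF assms(1)]]) (simp add: case_prod_unfold)
  also have "\<dots> = (\<Sum>y\<in>B x. \<Sum>g\<in>PiE S B. F (g(x := y)))"
    by (subst sum.cartesian_product) simp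
  finally show ?thesis .
qed

lemma Ev_jensen:
  assumes r: "1 \<le> r" and nn: "\<And>s. 0 \<le> F s"
  shows "Ev n F powr r \<le> Ev n (\<lambda>s. F s powr r)"
proof -
  have "(0::nat) \<in> {..<2^n}" by simp
  then have ne: "{..<(2::nat)^n} \<noteq> {}" by blast
  have "(\<Sum>k<(2::nat)^n. (1 / 2^n) *\<^sub>R F (sv n k)) powr r \<le> (\<Sum>k<(2::nat)^n. (1 / 2^n) * F (sv n k) powr r)"
    by (rule convex_on_sum[OF _ ne powr_convex0'[OF r]]) (use nn in auto)
  then show ?thesis unfolding Ev_def by (simp add: sum_divide_distrib[symmetric])
qed

lemma abs_poly_lb:
  fixes x c :: real assumes c: "0 < c"
  shows "3*c^2*x^2 - x^4 \<le> 2*c^3*\<bar>x\<bar>"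
proof -
  have "0 \<le> \<bar>x\<bar> * (\<bar>x\<bar> - c)^2 * (\<bar>x\<bar> + 2*c)" using c by simp
  also have "\<bar>x\<bar> * (\<bar>x\<bar> - c)^2 * (\<bar>x\<bar> + 2*c) = \<bar>x\<bar>^4 - 3*c^2*\<bar>x\<bar>^2 + 2*c^3*\<bar>x\<bar>"
    by (simp add: power2_eq_square power4_eq_xxxx power3_eq_cube algebra_simps)
  also have "\<bar>x\<bar>^4 = x^4" by (simp add: power_even_abs) 
  also have "\<bar>x\<bar>^2 = x^2" by simp
  finally show ?thesis by simp
qed

lemma khintchine_L1:
  fixes a :: "nat \<Rightarrow> real"
  shows "sqrt (\<Sum>j<n. (a j)^2) \<le> sqrt 3 * Ev n (\<lambda>s. \<bar>\<Sum>j<n. a j * s j\<bar>)"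
proof -
  define S where "S = (\<Sum>j<n. (a j)^2)"
  define X where "X = (\<lambda>s. \<Sum>j<n. a j * s j)"
  define E1 where "E1 = Ev n (\<lambda>s. \<bar>X s\<bar>)"
  define E4 where "E4 = Ev n (\<lambda>s. (X s)^4)"
  have S0: "0 \<le> S" unfolding S_def by (simp add: sum_nonneg)
  have m2: "Ev n (\<lambda>s. (X s)^2) = S" and m4: "E4 \<le> 3 * S^2"
    using Ev_moments[of n a] unfolding S_def X_def E4_def by auto
  have E10: "0 \<le> E1" unfolding E1_def by (simp add: Ev_nonneg)
  show ?thesis
  proof (cases "S = 0")
    case True then show ?thesis using E10 unfolding S_def[symmetric] E1_def X_def by simp
  next
    case False
    define \<sigma> where "\<sigma> = sqrt S"
    define q where "q = sqrt (3::real)"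
    have q0: "0 < q" and q2: "q^2 = 3" unfolding q_def by auto
    have sp: "0 < \<sigma>" using S0 False unfolding \<sigma>_def by simp
    have S\<sigma>: "S = \<sigma>^2" unfolding \<sigma>_def using S0 by simp
    define c where "c = q * \<sigma>"
    have c0: "0 < c" unfolding c_def using sp q0 by simp
    have c2: "c^2 = 3 * \<sigma>^2" unfolding c_def using q2 by (simp add: power_mult_distrib)
    have c3: "c^3 = 3 * q * \<sigma>^3" unfolding c_def using q2
      by (simp add: power_mult_distrib power3_eq_cube power2_eq_square)
    have "Ev n (\<lambda>s. 3*c^2*(X s)^2 - (X s)^4) \<le> Ev n (\<lambda>s. 2*c^3*\<bar>X s\<bar>)"
      by (rule Ev_mono) (rule abs_poly_lb[OF c0])
    moreover have "Ev n (\<lambda>s. 3*c^2*(X s)^2 - (X s)^4) = 3*c^2*S - E4"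
    proof -
      have "Ev n (\<lambda>s. 3*c^2*(X s)^2 - (X s)^4) = Ev n (\<lambda>s. 3*c^2*(X s)^2 + (-1)*(X s)^4)" by simp
      also have "\<dots> = 3*c^2*Ev n (\<lambda>s. (X s)^2) + (-1) * E4"
        unfolding Ev_add Ev_cmult E4_def ..
      finally show ?thesis using m2 by simp
    qed
    moreover have "Ev n (\<lambda>s. 2*c^3*\<bar>X s\<bar>) = 2*c^3*E1" unfolding E1_def by (rule Ev_cmult)
    ultimately have "3*c^2*S - E4 \<le> 2*c^3*E1" by simp
    then have "9*\<sigma>^4 - E4 \<le> 6*q*\<sigma>^3*E1" unfolding c2 c3 S\<sigma> by (simp add: power2_eq_square power4_eq_xxxx power3_eq_cube)
    moreover have "E4 \<le> 3*\<sigma>^4" using m4 unfolding S\<sigma> by (simp add: power2_eq_square power4_eq_xxxx)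
    ultimately have "6*\<sigma>^4 \<le> 6*q*\<sigma>^3*E1" by linarith
    then have "\<sigma>^3 * \<sigma> \<le> \<sigma>^3 * (q*E1)" by (simp add: power4_eq_xxxx power3_eq_cube mult_ac)
    then have "\<sigma> \<le> q * E1" using sp by simp
    then show ?thesis unfolding \<sigma>_def q_def E1_def S_def X_def .
  qed
qed

definition KH :: "real \<Rightarrow> real \<Rightarrow> bool" where
  "KH C r \<longleftrightarrow> (\<forall>n (a::nat\<Rightarrow>real). sqrt (\<Sum>j<n. (a j)^2)
      \<le> C * (Ev n (\<lambda>s. \<bar>\<Sum>j<n. a j * s j\<bar> powr r)) powr (1/r))"

lemma KH_sqrt3:
  assumes r: "1 \<le> r" shows "KH (sqrt 3) r"
  unfolding KH_def
proof (intro allI)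
  fix n and a :: "nat \<Rightarrow> real"
  let ?E = "Ev n (\<lambda>s. \<bar>\<Sum>j<n. a j * s j\<bar>)"
  have E0: "0 \<le> ?E" by (simp add: Ev_nonneg)
  have eq: "?E = (?E powr r) powr (1/r)" using E0 r by (simp add: powr_powr)
  have le: "(?E powr r) powr (1/r) \<le> (Ev n (\<lambda>s. \<bar>\<Sum>j<n. a j * s j\<bar> powr r)) powr (1/r)"
    using Ev_jensen[OF r, where F="\<lambda>s. \<bar>\<Sum>j<n. a j * s j\<bar>" and n=n] r E0
    by (intro powr_mono2) auto
  from eq le have "?E \<le> (Ev n (\<lambda>s. \<bar>\<Sum>j<n. a j * s j\<bar> powr r)) powr (1/r)" by simp
  then have "sqrt 3 * ?E \<le> sqrt 3 * (Ev n (\<lambda>s. \<bar>\<Sum>j<n. a j * s j\<bar> powr r)) powr (1/r)"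
    by (rule mult_left_mono) simp
  with khintchine_L1[where n=n and a=a]
  show "sqrt (\<Sum>j<n. (a j)^2) \<le> sqrt 3 * (Ev n (\<lambda>s. \<bar>\<Sum>j<n. a j * s j\<bar> powr r)) powr (1/r)"
    by (rule order.trans)
qed

lemma KH_ge1:
  assumes "KH C r" "0 < r" shows "1 \<le> C"
proof -
  have H: "\<And>n (a::nat\<Rightarrow>real). sqrt (\<Sum>j<n. (a j)^2) \<le> C * (Ev n (\<lambda>s. \<bar>\<Sum>j<n. a j * s j\<bar> powr r)) powr (1/r)"
    using assms(1) unfolding KH_def by blast
  have "Ev 1 (\<lambda>s. \<bar>\<Sum>j<1. 1 * s j\<bar> powr r) = 1"
    by (simp add: Ev_def sv_def numeral_2_eq_2 lessThan_Suc)
  then show ?thesis using H[where n=1 and a="\<lambda>_. 1"] by simp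
qed

lemma sin_add_mpi: "sin (y + real m * pi) = (-1)^m * sin y"
proof (induction m)
  case (Suc m)
  have "sin (y + real (Suc m) * pi) = sin ((y + real m * pi) + pi)" by (simp add: algebra_simps)
  also have "\<dots> = - sin (y + real m * pi)" by simp
  finally show ?case using Suc by simp
qed simp

lemma rad_val:
  assumes k: "k < 2^n" and j: "j < n" and t: "real k / 2^n < t" "t < (real k + 1) / 2^n"
  shows "rademacher (Suc j) t = (-1) ^ (k div 2^(n-1-j))"
proof -
  define d :: nat where "d = 2^(n-1-j)"
  define m where "m = k div d"
  have d0: "0 < d" unfolding d_def by simp
  have pw: "(2::real)^(Suc j) * real d = 2^n"
  proof -
    have "real d = 2^(n - Suc j)" unfolding d_def by simp
    then have "(2::real)^(Suc j) * real d = 2^(Suc j + (n - Suc j))" by (simp add: power_add)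
    also have "Suc j + (n - Suc j) = n" using j by simp
    finally show ?thesis .
  qed
  define x where "x = 2^(Suc j) * t"
  have x1: "real k / d < x"
  proof -
    have eq: "real k / d = 2^(Suc j) * (real k / 2^n)"
    proof -
      have "2^(Suc j) * (real k / 2^n) = (2^(Suc j) * real k) / (2^(Suc j) * real d)" unfolding pw by simp
      also have "\<dots> = real k / d" by (rule mult_divide_mult_cancel_left) simp
      finally show ?thesis by simp
    qed
    have "2^(Suc j) * (real k / 2^n) < 2^(Suc j) * t" using t(1) by (intro mult_strict_left_mono) auto
    then show ?thesis unfolding x_def eq .
  qed
  have x2: "x < (real k + 1) / d"
  proof -
    have eq: "(real k + 1) / d = 2^(Suc j) * ((real k + 1) / 2^n)"
    proof -
      have "2^(Suc j) * ((real k + 1) / 2^n) = (2^(Suc j) * (real k + 1)) / (2^(Suc j) * real d)" unfolding pw by simp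
      also have "\<dots> = (real k + 1) / d" by (rule mult_divide_mult_cancel_left) simp
      finally show ?thesis by simp
    qed
    have "2^(Suc j) * t < 2^(Suc j) * ((real k + 1) / 2^n)" using t(2) by (intro mult_strict_left_mono) auto
    then show ?thesis unfolding x_def eq .
  qed
  have md: "m * d \<le> k" unfolding m_def by simp
  have "k < m * d + d" using mod_less_divisor[OF d0, of k] div_mult_mod_eq[of k d] unfolding m_def by linarith
  then have md2: "k + 1 \<le> (m+1) * d" by simp
  have "real (m * d) \<le> real k" using md by (simp only: of_nat_le_iff)
  then have "real m * real d \<le> real k" by (simp only: of_nat_mult)
  then have "real m \<le> real k / d" using d0 by (simp add: pos_le_divide_eq)
  with x1 have xm: "real m < x" by simp
  have "real (k + 1) \<le> real ((m+1) * d)" using md2 by (simp only: of_nat_le_iff)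
  then have "real k + 1 \<le> (real m + 1) * real d" by (simp add: algebra_simps)
  then have "(real k + 1) / d \<le> real m + 1" using d0 by (simp add: pos_divide_le_eq)
  with x2 have xm2: "x < real m + 1" by simp
  have "(x - m) * pi + real m * pi = 2 ^ Suc j * pi * t"
    unfolding x_def by (simp add: algebra_simps)
  then have "sin (2 ^ Suc j * pi * t) = sin ((x - m) * pi + real m * pi)" by simp
  also have "\<dots> = (-1)^m * sin ((x - m) * pi)" by (rule sin_add_mpi)
  finally have e: "sin (2 ^ Suc j * pi * t) = (-1)^m * sin ((x - m) * pi)" .
  have "0 < sin ((x - m) * pi)" using xm xm2 by (intro sin_gt_zero) auto
  then show ?thesis unfolding rademacher_def e m_def d_def
    by (auto simp: sgn_mult minus_one_power_iff)
qed

lemma rad_vec: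
  assumes k: "k < 2^n" and t: "real k / 2^n < t" "t < (real k + 1) / 2^n"
  shows "(\<lambda>j. if j < n then rademacher (Suc j) t else 0) = sv n k"
  using rad_val[OF k _ t] unfolding sv_def by auto

lemma integral_rad:
  fixes G :: "(nat \<Rightarrow> real) \<Rightarrow> real"
  shows "((\<lambda>t. G (\<lambda>j. if j < n then rademacher (Suc j) t else 0)) has_integral Ev n G) {0..1}"
proof -
  define f where "f = (\<lambda>t. G (\<lambda>j. if j < n then rademacher (Suc j) t else 0))"
  have step: "m \<le> 2^n \<Longrightarrow> (f has_integral (\<Sum>k<m. G (sv n k)) / 2^n) {0..real m / 2^n}" for m
  proof (induction m)
    case 0 then show ?case using has_integral_refl(1)[of f "0::real"] by simp
  next
    case (Suc m)
    then have m: "m < 2^n" by simp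
    define lo where "lo = real m / 2^n"
    define hi where "hi = (real m + 1) / 2^n"
    have lohi: "lo \<le> hi" "hi - lo = 1 / 2^n" unfolding lo_def hi_def by (auto simp: divide_simps)
    have I0: "((\<lambda>x. G (sv n m)) has_integral ((1 / 2^n) * G (sv n m))) {lo..hi}"
      using has_integral_const_real[of "G (sv n m)" lo hi] lohi by simp
    have I2: "(f has_integral (G (sv n m) / 2^n)) {lo..hi}"
    proof (rule has_integral_spike_finite[where S = "{lo, hi}"])
      show "((\<lambda>x. G (sv n m)) has_integral (G (sv n m) / 2^n)) {lo..hi}" using I0 by simp
      fix x assume "x \<in> {lo..hi} - {lo, hi}"
      then have "real m / 2^n < x" "x < (real m + 1) / 2^n" unfolding lo_def hi_def by auto
      then show "f x = G (sv n m)" unfolding f_def using rad_vec[OF m] by simp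
    qed simp
    have I1: "(f has_integral (\<Sum>k<m. G (sv n k)) / 2^n) {0..real m / 2^n}" using Suc by simp
    have comb: "(f has_integral ((\<Sum>k<m. G (sv n k)) / 2^n + G (sv n m) / 2^n)) {0..(real m + 1) / 2^n}"
      by (rule has_integral_combine[OF _ _ I1 I2[unfolded lo_def hi_def]]) (auto simp: divide_simps)
    have sumeq: "(\<Sum>k<Suc m. G (sv n k)) / 2^n = (\<Sum>k<m. G (sv n k)) / 2^n + G (sv n m) / 2^n"
      by (simp add: add_divide_distrib)
    have ep: "real (Suc m) / 2^n = (real m + 1) / 2^n" by simp
    show ?case unfolding sumeq ep by (rule comb)
  qed
  from step[of "2^n"] show ?thesis unfolding f_def Ev_def by simp
qed

lemma sum_1_n: "(\<Sum>j=1..n. f j) = (\<Sum>j<n. f (Suc j))"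
  unfolding One_nat_def by (rule sum.atLeast1_atMost_eq)

lemma integral_rad_sum:
  "integral {0..1} (\<lambda>t. \<bar>\<Sum>j=1..n. a j * rademacher j t\<bar> powr r)
     = Ev n (\<lambda>s. \<bar>\<Sum>j<n. a (Suc j) * s j\<bar> powr r)"
proof -
  have e: "\<And>t. (\<Sum>j<n. a (Suc j) * (if j < n then rademacher (Suc j) t else 0)) = (\<Sum>j=1..n. a j * rademacher j t)"
    unfolding sum_1_n by (intro sum.cong) auto
  show ?thesis
    using integral_unique[OF integral_rad[where G = "\<lambda>s. \<bar>\<Sum>j<n. a (Suc j) * s j\<bar> powr r" and n = n]]
    unfolding e .
qed

lemma khA_eq: "khintchine_A r = Inf {C. KH C r}"
proof -
  have "{C. \<forall>(n::nat) (a::nat \<Rightarrow> real).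
     sqrt (\<Sum>j=1..n. (a j)\<^sup>2)
       \<le> C * (integral {0..1} (\<lambda>t. \<bar>\<Sum>j=1..n. a j * rademacher j t\<bar> powr r)) powr (1 / r)}
     = {C. KH C r}" unfolding KH_def
  proof (intro Collect_cong iffI allI)
    fix C n and b :: "nat \<Rightarrow> real"
    assume H: "\<forall>(n::nat) (a::nat \<Rightarrow> real).
     sqrt (\<Sum>j=1..n. (a j)\<^sup>2)
       \<le> C * (integral {0..1} (\<lambda>t. \<bar>\<Sum>j=1..n. a j * rademacher j t\<bar> powr r)) powr (1 / r)"
    show "sqrt (\<Sum>j<n. (b j)^2) \<le> C * (Ev n (\<lambda>s. \<bar>\<Sum>j<n. b j * s j\<bar> powr r)) powr (1/r)"
    proof -
      have h1: "sqrt (\<Sum>j=1..n. (b (j - 1))\<^sup>2)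
       \<le> C * (integral {0..1} (\<lambda>t. \<bar>\<Sum>j=1..n. b (j - 1) * rademacher j t\<bar> powr r)) powr (1 / r)"
        by (rule H[rule_format, where n=n and a="\<lambda>j. b (j - 1)"])
      have e1: "(\<Sum>j=1..n. (b (j - 1))\<^sup>2) = (\<Sum>j<n. (b j)^2)" unfolding sum_1_n by (simp only: diff_Suc_1)
      have e2: "integral {0..1} (\<lambda>t. \<bar>\<Sum>j=1..n. b (j - 1) * rademacher j t\<bar> powr r)
           = Ev n (\<lambda>s. \<bar>\<Sum>j<n. b j * s j\<bar> powr r)"
        using integral_rad_sum[where n=n and a="\<lambda>j. b (j - 1)" and r=r] by (simp only: diff_Suc_1)
      show ?thesis using h1 unfolding e1 e2 .
    qed
  next
    fix C assume H0: "\<forall>n (b::nat\<Rightarrow>real). sqrt (\<Sum>j<n. (b j)^2) \<le> C * (Ev n (\<lambda>s. \<bar>\<Sum>j<n. b j * s j\<bar> powr r)) powr (1/r)"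
    then have H: "\<And>n (b::nat\<Rightarrow>real). sqrt (\<Sum>j<n. (b j)^2) \<le> C * (Ev n (\<lambda>s. \<bar>\<Sum>j<n. b j * s j\<bar> powr r)) powr (1/r)"
      by blast
    fix n and a :: "nat \<Rightarrow> real"
    show "sqrt (\<Sum>j=1..n. (a j)\<^sup>2)
       \<le> C * (integral {0..1} (\<lambda>t. \<bar>\<Sum>j=1..n. a j * rademacher j t\<bar> powr r)) powr (1 / r)"
      unfolding integral_rad_sum unfolding sum_1_n using H[where n=n and b="\<lambda>j. a (Suc j)"] .
  qed
  then show ?thesis unfolding khintchine_A_def by simp
qed

definition fs :: "(nat \<Rightarrow> real) \<Rightarrow> bool" where
  "fs x \<longleftrightarrow> (\<exists>N. \<forall>n\<ge>N. x n = 0)"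

lemma fs_lin: "fs u \<Longrightarrow> fs v \<Longrightarrow> fs (\<lambda>n. a * u n + b * v n)"
proof -
  assume "fs u" "fs v"
  then obtain N1 N2 where "\<forall>n\<ge>N1. u n = 0" "\<forall>n\<ge>N2. v n = 0" unfolding fs_def by blast
  then have "\<forall>n\<ge>max N1 N2. a * u n + b * v n = 0" by simp
  then show ?thesis unfolding fs_def by blast
qed

lemma fs_zero: "fs (\<lambda>n. 0)" unfolding fs_def by auto

lemma fs_sum: "finite J \<Longrightarrow> (\<And>j. j \<in> J \<Longrightarrow> fs (u j)) \<Longrightarrow> fs (\<lambda>n. \<Sum>j\<in>J. c j * u j n)"
proof (induction J rule: finite_induct)
  case empty then show ?case by (simp add: fs_zero)
next
  case (insert j J)
  then show ?case using fs_lin[of "u j" "\<lambda>n. \<Sum>j\<in>J. c j * u j n" "c j" 1] by simp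
qed

lemma fs_unit: "fs (unit_vec i)"
  unfolding fs_def unit_vec_def by (rule exI[of _ "Suc i"]) auto

lemma fs_Xspace: assumes "fs x" shows "x \<in> Xspace p"
proof -
  obtain N where N: "\<forall>n\<ge>N. x n = 0" using assms unfolding fs_def by blast
  show ?thesis
  proof (cases "p = \<infinity>")
    case True
    have "eventually (\<lambda>n. x n = 0) sequentially" using N eventually_sequentially by blast
    then have "x \<longlonglongrightarrow> 0" by (rule tendsto_eventually)
    then show ?thesis using True by (simp add: Xspace_def)
  next
    case False
    have "summable (\<lambda>n. \<bar>x n\<bar> powr real_of_ereal p)"
      by (rule summable_finite[of "{..<N}"]) (use N in auto)
    then show ?thesis using False by (simp add: Xspace_def)
  qed
qed

lemma Xnorm_fin:
  assumes "p \<noteq> \<infinity>" "\<forall>n\<ge>N. x n = 0" "0 < real_of_ereal p"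
  shows "Xnorm p x = (\<Sum>n<N. \<bar>x n\<bar> powr real_of_ereal p) powr (1 / real_of_ereal p)"
proof -
  have "(\<Sum>n. \<bar>x n\<bar> powr real_of_ereal p) = (\<Sum>n<N. \<bar>x n\<bar> powr real_of_ereal p)"
    by (rule suminf_finite) (use assms in auto)
  then show ?thesis using assms by (simp add: Xnorm_def)
qed

lemma Xnorm_inf_le:
  assumes "\<And>n. \<bar>x n\<bar> \<le> 1" shows "Xnorm \<infinity> x \<le> 1"
  unfolding Xnorm_def using assms by (simp add: cSUP_least)

lemma Xnorm_zero: "Xnorm p (\<lambda>n. 0) = 0"
  by (simp add: Xnorm_def)

lemma Xspace_scale:
  assumes "x \<in> Xspace p" shows "(\<lambda>n. c * x n) \<in> Xspace p"
proof (cases "p = \<infinity>")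
  case True then show ?thesis using assms by (simp add: Xspace_def tendsto_mult_right_zero)
next
  case False
  then have "summable (\<lambda>n. \<bar>x n\<bar> powr real_of_ereal p)" using assms by (simp add: Xspace_def)
  then have "summable (\<lambda>n. \<bar>c\<bar> powr real_of_ereal p * \<bar>x n\<bar> powr real_of_ereal p)"
    by (rule summable_mult)
  then show ?thesis using False by (simp add: Xspace_def abs_mult powr_mult)
qed

lemma Xnorm_scale_le:
  assumes "x \<in> Xspace p" "0 < c" "p \<noteq> \<infinity> \<Longrightarrow> 0 < real_of_ereal p"
  shows "Xnorm p (\<lambda>n. c * x n) \<le> c * Xnorm p x"
proof (cases "p = \<infinity>")
  case True
  then have "x \<longlonglongrightarrow> 0" using assms by (simp add: Xspace_def)
  then have "Bseq x" by (rule convergent_imp_Bseq[OF convergentI])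
  then obtain K where K: "\<And>n. \<bar>x n\<bar> \<le> K" unfolding Bseq_def by auto
  have bdd: "bdd_above (range (\<lambda>n. \<bar>x n\<bar>))" unfolding bdd_above_def using K by auto
  have "(SUP n. \<bar>c * x n\<bar>) \<le> c * (SUP n. \<bar>x n\<bar>)"
  proof (rule cSUP_least)
    fix n have "\<bar>x n\<bar> \<le> (SUP n. \<bar>x n\<bar>)" by (rule cSUP_upper[OF UNIV_I bdd])
    then show "\<bar>c * x n\<bar> \<le> c * (SUP n. \<bar>x n\<bar>)" using assms by (simp add: abs_mult)
  qed simp
  then show ?thesis using True by (simp add: Xnorm_def)
next
  case False
  define P where "P = real_of_ereal p"
  have P: "0 < P" using assms False unfolding P_def by simp
  have sm: "summable (\<lambda>n. \<bar>x n\<bar> powr P)" using assms False by (simp add: Xspace_def P_def)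
  have "(\<Sum>n. \<bar>c * x n\<bar> powr P) = (\<Sum>n. c powr P * \<bar>x n\<bar> powr P)"
    using assms by (simp add: abs_mult powr_mult)
  also have "\<dots> = c powr P * (\<Sum>n. \<bar>x n\<bar> powr P)" by (rule suminf_mult[OF sm])
  finally have e1: "(\<Sum>n. \<bar>c * x n\<bar> powr P) = c powr P * (\<Sum>n. \<bar>x n\<bar> powr P)" .
  have s0: "0 \<le> (\<Sum>n. \<bar>x n\<bar> powr P)" using suminf_nonneg[OF sm] by simp
  have "(c powr P * (\<Sum>n. \<bar>x n\<bar> powr P)) powr (1/P) = (c powr P) powr (1/P) * (\<Sum>n. \<bar>x n\<bar> powr P) powr (1/P)"
    by (rule powr_mult)
  also have "(c powr P) powr (1/P) = c" using P assms(2) by (simp add: powr_powr)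
  finally have "(\<Sum>n. \<bar>c * x n\<bar> powr P) powr (1/P) = c * (\<Sum>n. \<bar>x n\<bar> powr P) powr (1/P)"
    unfolding e1 .
  then show ?thesis using False by (simp add: Xnorm_def P_def)
qed

locale setting =
  fixes M :: nat and p :: ereal and T :: "(nat \<Rightarrow> nat \<Rightarrow> real) \<Rightarrow> real"
  assumes M1: "1 \<le> M" and p2: "2 \<le> p"
    and ml: "multilinear_form M (\<lambda>k. if k = 0 then p else \<infinity>) T"
    and ct: "continuous_form M (\<lambda>k. if k = 0 then p else \<infinity>) T"
begin

abbreviation "ps \<equiv> (\<lambda>k::nat. if k = 0 then p else \<infinity>)"

lemma ps_pos: "ps k \<noteq> \<infinity> \<Longrightarrow> 0 < real_of_ereal (ps k)"
proof -
  assume "ps k \<noteq> \<infinity>"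
  then have "k = 0" "p \<noteq> \<infinity>" by (auto split: if_splits)
  then show ?thesis using p2 by (cases p) auto
qed

lemma mdom_upd: "x \<in> mdom M ps \<Longrightarrow> k < M \<Longrightarrow> u \<in> Xspace (ps k) \<Longrightarrow> x(k := u) \<in> mdom M ps"
  unfolding mdom_def by auto

lemma lin_gen: "x \<in> mdom M ps \<Longrightarrow> k < M \<Longrightarrow> u \<in> Xspace (ps k) \<Longrightarrow> v \<in> Xspace (ps k) \<Longrightarrow>
   T (x(k := (\<lambda>n. a * u n + b * v n))) = a * T (x(k := u)) + b * T (x(k := v))"
  using ml unfolding multilinear_form_def by blast

lemma lin_scale: "x \<in> mdom M ps \<Longrightarrow> k < M \<Longrightarrow> u \<in> Xspace (ps k) \<Longrightarrow>
   T (x(k := (\<lambda>n. c * u n))) = c * T (x(k := u))"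
  using lin_gen[of x k u u c 0] by simp

lemma lin_zero: "x \<in> mdom M ps \<Longrightarrow> k < M \<Longrightarrow> T (x(k := (\<lambda>n. 0))) = 0"
  using lin_scale[of x k "\<lambda>n. 0" 0] fs_Xspace[OF fs_zero] by simp

lemma lin_sum:
  assumes x: "x \<in> mdom M ps" and k: "k < M" and fin: "finite J" and u: "\<And>j. j \<in> J \<Longrightarrow> fs (u j)"
  shows "T (x(k := (\<lambda>n. \<Sum>j\<in>J. c j * u j n))) = (\<Sum>j\<in>J. c j * T (x(k := u j)))"
  using fin u
proof (induction J rule: finite_induct)
  case empty show ?case unfolding sum.empty using lin_zero[OF x k] .
next
  case (insert j J)
  have f1: "(\<lambda>n. \<Sum>j\<in>insert j J. c j * u j n) = (\<lambda>n. c j * u j n + 1 * (\<Sum>j\<in>J. c j * u j n))"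
    using insert(1,2) by (simp add: fun_eq_iff)
  have f2: "T (x(k := (\<lambda>n. c j * u j n + 1 * (\<Sum>j\<in>J. c j * u j n)))) = c j * T (x(k := u j)) + 1 * T (x(k := (\<lambda>n. \<Sum>j\<in>J. c j * u j n)))"
    using insert(4) insert(1) by (intro lin_gen[OF x k] fs_Xspace fs_sum) auto
  have f3: "(\<Sum>j\<in>insert j J. c j * T (x(k := u j))) = c j * T (x(k := u j)) + (\<Sum>j\<in>J. c j * T (x(k := u j)))"
    using insert(1,2) by (rule sum.insert)
  have ih: "T (x(k := (\<lambda>n. \<Sum>j\<in>J. c j * u j n))) = (\<Sum>j\<in>J. c j * T (x(k := u j)))"
    using insert.IH insert.prems by blast
  show ?case unfolding f1 f2 f3 ih by (simp only: mult.left_neutral)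
qed

lemma zero_mdom: "(\<lambda>k n. 0) \<in> mdom M ps"
  unfolding mdom_def using fs_Xspace[OF fs_zero] by auto

lemma T_zero: "T (\<lambda>k n. 0) = 0"
  using lin_zero[OF zero_mdom, of 0] M1 by (simp add: fun_upd_idem)

lemma scale_all:
  assumes x: "x \<in> mdom M ps" and m: "m \<le> M"
  shows "(\<lambda>k n. if k < m then c * x k n else x k n) \<in> mdom M ps
       \<and> T (\<lambda>k n. if k < m then c * x k n else x k n) = c^m * T x"
  using m
proof (induction m)
  case 0 then show ?case using x by simp
next
  case (Suc m)
  define y where "y = (\<lambda>k n. if k < m then c * x k n else x k n)"
  have y: "y \<in> mdom M ps" "T y = c^m * T x" using Suc unfolding y_def by auto
  have xm: "x m \<in> Xspace (ps m)" using x Suc unfolding mdom_def by auto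
  have ym: "y(m := x m) = y" unfolding y_def by auto
  have e: "(\<lambda>k n. if k < Suc m then c * x k n else x k n) = y(m := (\<lambda>n. c * x m n))"
    unfolding y_def by (auto simp: fun_eq_iff)
  have mlt: "m < M" using Suc.prems by simp
  have "T (y(m := (\<lambda>n. c * x m n))) = c * T (y(m := x m))"
    by (rule lin_scale[OF y(1) mlt xm])
  then have val: "T (y(m := (\<lambda>n. c * x m n))) = c^Suc m * T x" unfolding ym y(2) by simp
  have mem: "y(m := (\<lambda>n. c * x m n)) \<in> mdom M ps"
    by (rule mdom_upd[OF y(1) mlt Xspace_scale[OF xm]])
  show ?case unfolding e using mem val by (rule conjI)
qed

lemma bounded: "\<exists>B. \<forall>x\<in>mdom M ps. (\<forall>k<M. Xnorm (ps k) (x k) \<le> 1) \<longrightarrow> \<bar>T x\<bar> \<le> B"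
proof -
  have C0: "\<forall>\<epsilon>>0. \<exists>\<delta>>0. \<forall>y\<in>mdom M ps. (\<forall>k<M. Xnorm (ps k) (\<lambda>n. y k n - 0) < \<delta>) \<longrightarrow> \<bar>T y - T (\<lambda>k n. 0)\<bar> < \<epsilon>"
    using bspec[OF ct[unfolded continuous_form_def] zero_mdom] by simp
  obtain \<delta> where d: "\<delta> > 0" and H: "\<forall>y\<in>mdom M ps. (\<forall>k<M. Xnorm (ps k) (\<lambda>n. y k n - 0) < \<delta>) \<longrightarrow> \<bar>T y - T (\<lambda>k n. 0)\<bar> < 1"
    using C0[rule_format, OF zero_less_one] by blast
  define c where "c = \<delta> / 2"
  have c: "0 < c" "c < \<delta>" using d unfolding c_def by auto
  show ?thesis
  proof (intro exI ballI impI)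
    fix x assume x: "x \<in> mdom M ps" and n1: "\<forall>k<M. Xnorm (ps k) (x k) \<le> 1"
    define y where "y = (\<lambda>k n. if k < M then c * x k n else x k n)"
    have y: "y \<in> mdom M ps" "T y = c^M * T x" using scale_all[OF x, of M c] unfolding y_def by auto
    have "\<forall>k<M. Xnorm (ps k) (\<lambda>n. y k n - 0) < \<delta>"
    proof (intro allI impI)
      fix k assume k: "k < M"
      have xk: "x k \<in> Xspace (ps k)" using x k unfolding mdom_def by auto
      have "Xnorm (ps k) (\<lambda>n. y k n - 0) = Xnorm (ps k) (\<lambda>n. c * x k n)" unfolding y_def using k by simp
      also have "\<dots> \<le> c * Xnorm (ps k) (x k)" using Xnorm_scale_le[OF xk c(1) ps_pos] by simp
      also have "\<dots> \<le> c * 1" using n1 k c by (intro mult_left_mono) auto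
      finally show "Xnorm (ps k) (\<lambda>n. y k n - 0) < \<delta>" using c by simp
    qed
    then have "\<bar>T y\<bar> < 1" using H y(1) T_zero by auto
    then have "c^M * \<bar>T x\<bar> < 1" using y c by (simp add: abs_mult)
    then show "\<bar>T x\<bar> \<le> 1 / c^M" using c by (simp add: field_simps)
  qed
qed

definition "ball1 = {x\<in>mdom M ps. \<forall>k<M. Xnorm (ps k) (x k) \<le> 1}"

lemma form_norm_ge:
  assumes "x \<in> mdom M ps" "\<forall>k<M. Xnorm (ps k) (x k) \<le> 1"
  shows "\<bar>T x\<bar> \<le> form_norm M ps T"
proof -
  obtain B where B: "\<forall>x\<in>mdom M ps. (\<forall>k<M. Xnorm (ps k) (x k) \<le> 1) \<longrightarrow> \<bar>T x\<bar> \<le> B" using bounded by blast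
  have "bdd_above ((\<lambda>x. \<bar>T x\<bar>) ` {x\<in>mdom M ps. \<forall>k<M. Xnorm (ps k) (x k) \<le> 1})"
    using B by (auto intro!: bdd_aboveI)
  then show ?thesis unfolding form_norm_def using assms by (intro cSUP_upper) auto
qed

lemma form_norm_nonneg: "0 \<le> form_norm M ps T"
  using form_norm_ge[OF zero_mdom] by (simp add: Xnorm_zero)

end

lemma sum_unit: "(\<Sum>i<N. c i * unit_vec i n) = (if n < N then c n else 0)"
proof -
  have "(\<Sum>i<N. c i * unit_vec i n) = (\<Sum>i<N. if i = n then c i else 0)"
    unfolding unit_vec_def by (intro sum.cong) auto
  then show ?thesis by simp
qed

lemma powr_qm1: assumes "0 \<le> y" "1 < q" shows "y powr (q - 1) * y = y powr (q::real)"
proof (cases "y = 0")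
  case False
  have "y powr (q - 1) * y = y powr (q - 1) * y powr 1" using assms by simp
  also have "\<dots> = y powr (q - 1 + 1)" by (rule powr_add[symmetric])
  also have "q - 1 + 1 = q" by simp
  finally show ?thesis .
qed simp

lemma sgn_mul_self: "sgn (x::real) * x = \<bar>x\<bar>" by (simp add: sgn_real_def)
lemma abs_sgn_nz: "x \<noteq> 0 \<Longrightarrow> \<bar>sgn (x::real)\<bar> = 1" by (simp add: sgn_real_def)

context setting begin

lemma conj_exp_cases:
  "(p = \<infinity> \<and> conj_exp p = 1) \<or>
   (p \<noteq> \<infinity> \<and> 2 \<le> real_of_ereal p \<and> conj_exp p = real_of_ereal p / (real_of_ereal p - 1))"
  using p2 by (cases p) (auto simp: conj_exp_def)

lemma mdom_upd0_ball:
  assumes x: "x \<in> mdom M ps" and xs: "\<forall>k<M. k \<noteq> 0 \<longrightarrow> Xnorm (ps k) (x k) \<le> 1"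
    and u: "fs u" and un: "Xnorm p u \<le> 1"
  shows "\<bar>T (x(0 := u))\<bar> \<le> form_norm M ps T"
proof (rule form_norm_ge)
  show "x(0 := u) \<in> mdom M ps" using M1 by (intro mdom_upd[OF x] fs_Xspace[OF u]) auto
  show "\<forall>k<M. Xnorm (ps k) ((x(0 := u)) k) \<le> 1" using xs un by auto
qed

lemma dual:
  assumes x: "x \<in> mdom M ps" and xs: "\<forall>k<M. k \<noteq> 0 \<longrightarrow> Xnorm (ps k) (x k) \<le> 1"
  shows "(\<Sum>i<N. \<bar>T (x(0 := unit_vec i))\<bar> powr conj_exp p) \<le> form_norm M ps T powr conj_exp p"
proof -
  define b where "b i = T (x(0 := unit_vec i))" for i
  define FN where "FN = form_norm M ps T"
  have FN0: "0 \<le> FN" unfolding FN_def by (rule form_norm_nonneg)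
  have M0: "0 < M" using M1 by simp
  have lin: "T (x(0 := (\<lambda>n. \<Sum>i<N. c i * unit_vec i n))) = (\<Sum>i<N. c i * b i)" for c
    unfolding b_def by (rule lin_sum[OF x M0]) (auto simp: fs_unit)
  have fsu: "fs (\<lambda>n. \<Sum>i<N. c i * unit_vec i n)" for c by (rule fs_sum) (auto simp: fs_unit)
  have bound: "\<And>c. Xnorm p (\<lambda>n. \<Sum>i<N. c i * unit_vec i n) \<le> 1 \<Longrightarrow> \<bar>\<Sum>i<N. c i * b i\<bar> \<le> FN"
  proof -
    fix c assume "Xnorm p (\<lambda>n. \<Sum>i<N. c i * unit_vec i n) \<le> 1"
    from mdom_upd0_ball[OF x xs fsu this] show "\<bar>\<Sum>i<N. c i * b i\<bar> \<le> FN" unfolding lin FN_def .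
  qed
  from conj_exp_cases show ?thesis
  proof
    assume A: "p = \<infinity> \<and> conj_exp p = 1"
    have "Xnorm \<infinity> (\<lambda>n. \<Sum>i<N. sgn (b i) * unit_vec i n) \<le> 1"
      by (intro Xnorm_inf_le) (auto simp: sum_unit sgn_real_def)
    then have "Xnorm p (\<lambda>n. \<Sum>i<N. sgn (b i) * unit_vec i n) \<le> 1" using A by simp
    then have "\<bar>\<Sum>i<N. sgn (b i) * b i\<bar> \<le> FN" by (rule bound)
    moreover have "(\<Sum>i<N. sgn (b i) * b i) = (\<Sum>i<N. \<bar>b i\<bar>)" by (simp add: sgn_mul_self)
    ultimately have "(\<Sum>i<N. \<bar>b i\<bar>) \<le> FN" by (simp add: sum_nonneg)
    moreover have ce: "conj_exp p = 1" using A by (rule conjunct2)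
    ultimately show ?thesis using FN0 unfolding b_def FN_def ce by simp
  next
    assume A: "p \<noteq> \<infinity> \<and> 2 \<le> real_of_ereal p \<and> conj_exp p = real_of_ereal p / (real_of_ereal p - 1)"
    define P where "P = real_of_ereal p"
    define q where "q = conj_exp p"
    have P2: "2 \<le> P" and qd: "q = P / (P - 1)" using A unfolding P_def q_def by auto
    have q1: "1 < q" using P2 unfolding qd by (simp add: field_simps)
    have qP: "(q - 1) * P = q" using P2 unfolding qd by (simp add: field_simps)
    have iq: "1 - 1 / P = 1 / q" using P2 unfolding qd by (simp add: field_simps)
    define S where "S = (\<Sum>i<N. \<bar>b i\<bar> powr q)"
    have S0: "0 \<le> S" unfolding S_def by (simp add: sum_nonneg)
    show ?thesis
    proof (cases "S = 0")
      case True then show ?thesis using FN0 unfolding S_def b_def FN_def q_def by simp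
    next
      case False
      then have Sp: "0 < S" using S0 by simp
      define c where "c i = sgn (b i) * \<bar>b i\<bar> powr (q - 1) / S powr (1/P)" for i
      have cb: "c i * b i = \<bar>b i\<bar> powr q / S powr (1/P)" for i
      proof -
        have "c i * b i = (\<bar>b i\<bar> powr (q - 1) * (sgn (b i) * b i)) / S powr (1/P)"
          unfolding c_def by (simp add: field_simps)
        also have "sgn (b i) * b i = \<bar>b i\<bar>" by (simp add: sgn_mul_self)
        finally show ?thesis using powr_qm1[OF abs_ge_zero q1] by simp
      qed
      have "(\<Sum>i<N. c i * b i) = S / S powr (1/P)"
        unfolding cb S_def by (simp add: sum_divide_distrib)
      also have "\<dots> = S powr (1 - 1/P)" using Sp by (simp add: powr_diff)
      finally have Tval: "(\<Sum>i<N. c i * b i) = S powr (1/q)" unfolding iq .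
      have cabs: "\<bar>c i\<bar> powr P = \<bar>b i\<bar> powr q / S" for i
      proof (cases "b i = 0")
        case True then show ?thesis unfolding c_def using P2 by simp
      next
        case False
        have "\<bar>c i\<bar> = \<bar>b i\<bar> powr (q - 1) / S powr (1/P)" unfolding c_def using False
          by (simp add: abs_mult abs_sgn_nz)
        then have "\<bar>c i\<bar> powr P = (\<bar>b i\<bar> powr (q - 1)) powr P / (S powr (1/P)) powr P"
          by (simp add: powr_divide)
        also have "(\<bar>b i\<bar> powr (q - 1)) powr P = \<bar>b i\<bar> powr q" unfolding powr_powr qP ..
        also have "(S powr (1/P)) powr P = S" using P2 Sp unfolding powr_powr by simp
        finally show ?thesis .
      qed
      have nu: "Xnorm p (\<lambda>n. \<Sum>i<N. c i * unit_vec i n) = (\<Sum>n<N. \<bar>\<Sum>i<N. c i * unit_vec i n\<bar> powr P) powr (1/P)"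
        unfolding P_def by (rule Xnorm_fin) (use A P2 P_def in \<open>auto simp: sum_unit\<close>)
      have "(\<Sum>n<N. \<bar>\<Sum>i<N. c i * unit_vec i n\<bar> powr P) = (\<Sum>n<N. \<bar>c n\<bar> powr P)"
        by (intro sum.cong) (auto simp: sum_unit)
      also have "\<dots> = (\<Sum>n<N. \<bar>b n\<bar> powr q) / S" unfolding cabs by (rule sum_divide_distrib[symmetric])
      also have "\<dots> = 1" using Sp unfolding S_def by simp
      finally have "Xnorm p (\<lambda>n. \<Sum>i<N. c i * unit_vec i n) = 1" unfolding nu by simp
      then have "\<bar>\<Sum>i<N. c i * b i\<bar> \<le> FN" using bound by simp
      then have "S powr (1/q) \<le> FN" unfolding Tval by simp
      then have "(S powr (1/q)) powr q \<le> FN powr q" using q1 by (intro powr_mono2) auto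
      then have "S \<le> FN powr q" using q1 S0 unfolding powr_powr by simp
      then show ?thesis unfolding S_def b_def FN_def q_def .
    qed
  qed
qed

end

definition U :: "(nat \<Rightarrow> nat \<Rightarrow> real) \<Rightarrow> nat set \<Rightarrow> (nat \<Rightarrow> nat) \<Rightarrow> nat \<Rightarrow> nat \<Rightarrow> real" where
  "U z K j = (\<lambda>k. if k \<in> K then unit_vec (j k) else z k)"
definition Sg :: "nat \<Rightarrow> (nat \<Rightarrow> nat \<Rightarrow> real) \<Rightarrow> nat set \<Rightarrow> (nat \<Rightarrow> nat) \<Rightarrow> nat \<Rightarrow> nat \<Rightarrow> real" where
  "Sg N z K \<kappa> = (\<lambda>k. if k \<in> K then sv N (\<kappa> k) else z k)"
definition Av :: "nat \<Rightarrow> nat set \<Rightarrow> ((nat \<Rightarrow> nat) \<Rightarrow> real) \<Rightarrow> real" where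
  "Av N K F = (\<Sum>\<kappa>\<in>PiE K (\<lambda>_. {..<(2::nat)^N}). F \<kappa>) / (2^N)^(card K)"

lemma fs_sv: "fs (sv N k)" unfolding fs_def sv_def by (rule exI[of _ N]) auto
lemma sv_abs: "\<bar>sv N k j\<bar> \<le> 1" unfolding sv_def by auto
lemma sv_expand: "(\<lambda>n. \<Sum>y<N. sv N k y * unit_vec y n) = sv N k"
  by (auto simp: fun_eq_iff sum_unit sv_def)

lemma U_insert: "a \<notin> K \<Longrightarrow> U z (insert a K) (g(a := y)) = U (z(a := unit_vec y)) K g"
  unfolding U_def by (auto simp: fun_eq_iff)
lemma Sg_insert: "a \<notin> K \<Longrightarrow> Sg N z (insert a K) (\<kappa>(a := k)) = (Sg N z K \<kappa>)(a := sv N k)"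
  unfolding Sg_def by (auto simp: fun_eq_iff)
lemma Sg_upd: "a \<notin> K \<Longrightarrow> Sg N (z(a := v)) K \<kappa> = (Sg N z K \<kappa>)(a := v)"
  unfolding Sg_def by (auto simp: fun_eq_iff)

lemma Av_insert:
  assumes "a \<notin> K" "finite K"
  shows "Av N (insert a K) F = Av N K (\<lambda>\<kappa>. (\<Sum>k<2^N. F (\<kappa>(a := k))) / 2^N)"
proof -
  have "(\<Sum>\<kappa>\<in>PiE (insert a K) (\<lambda>_. {..<(2::nat)^N}). F \<kappa>) = (\<Sum>k<2^N. \<Sum>\<kappa>\<in>PiE K (\<lambda>_. {..<(2::nat)^N}). F (\<kappa>(a := k)))"
    by (rule sum_PiE_insert) (use assms in auto)
  also have "\<dots> = (\<Sum>\<kappa>\<in>PiE K (\<lambda>_. {..<(2::nat)^N}). \<Sum>k<2^N. F (\<kappa>(a := k)))"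
    by (rule sum.swap)
  finally have e: "(\<Sum>\<kappa>\<in>PiE (insert a K) (\<lambda>_. {..<(2::nat)^N}). F \<kappa>) = (\<Sum>\<kappa>\<in>PiE K (\<lambda>_. {..<(2::nat)^N}). \<Sum>k<2^N. F (\<kappa>(a := k)))" .
  have c: "card (insert a K) = Suc (card K)" using assms by simp
  show ?thesis unfolding Av_def e c
    by (simp add: sum_divide_distrib[symmetric] divide_divide_eq_left mult.commute)
qed

lemma Av_empty: "Av N {} F = F (\<lambda>_. undefined)"
  unfolding Av_def by simp

lemma card_PiE_pow: "finite K \<Longrightarrow> card (PiE K (\<lambda>_. {..<(2::nat)^N})) = (2^N)^(card K)"
  by (simp add: card_PiE)

lemma Av_const: "finite K \<Longrightarrow> Av N K (\<lambda>_. c) = c"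
  unfolding Av_def using card_PiE_pow[of K N] by simp

lemma Av_mono: "(\<And>\<kappa>. \<kappa> \<in> PiE K (\<lambda>_. {..<(2::nat)^N}) \<Longrightarrow> F \<kappa> \<le> G \<kappa>) \<Longrightarrow> Av N K F \<le> Av N K G"
  unfolding Av_def by (intro divide_right_mono sum_mono) auto

lemma Av_nonneg: "(\<And>\<kappa>. 0 \<le> F \<kappa>) \<Longrightarrow> 0 \<le> Av N K F"
  unfolding Av_def by (intro divide_nonneg_nonneg sum_nonneg) auto

lemma Av_cmult: "Av N K (\<lambda>\<kappa>. c * F \<kappa>) = c * Av N K F"
  unfolding Av_def by (simp add: sum_distrib_left)

lemma Av_sum: "Av N K (\<lambda>\<kappa>. \<Sum>i\<in>I. F i \<kappa>) = (\<Sum>i\<in>I. Av N K (F i))"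
  unfolding Av_def by (simp add: sum.swap[of _ I] sum_divide_distrib)

lemma abs_powr2: "\<bar>t::real\<bar> powr 2 = t^2"
  by (cases "t = 0") (simp_all add: powr_numeral)

lemma powr_sq: "0 \<le> (x::real) \<Longrightarrow> (x powr a)^2 = x powr (2*a)"
proof -
  have "(x powr a)^2 = x powr a * x powr a" by (simp add: power2_eq_square)
  also have "\<dots> = x powr (a + a)" by (rule powr_add[symmetric])
  also have "a + a = 2 * a" by simp
  finally show ?thesis .
qed

context setting begin

lemma U_mdom: "z \<in> mdom M ps \<Longrightarrow> K \<subseteq> {..<M} \<Longrightarrow> U z K j \<in> mdom M ps"
  unfolding mdom_def U_def using fs_Xspace[OF fs_unit] by auto

lemma Sg_mdom: "z \<in> mdom M ps \<Longrightarrow> K \<subseteq> {..<M} \<Longrightarrow> Sg N z K \<kappa> \<in> mdom M ps"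
  unfolding mdom_def Sg_def using fs_Xspace[OF fs_sv] by auto

lemma multi_kh:
  assumes KH: "KH C r" and r1: "1 \<le> r" and r2: "r \<le> 2"
  shows "m < M \<Longrightarrow> z \<in> mdom M ps \<Longrightarrow>
    sqrt (\<Sum>j\<in>PiE {1..m} (\<lambda>_. {..<N}). (T (U z {1..m} j))^2)
      \<le> C^m * (Av N {1..m} (\<lambda>\<kappa>. \<bar>T (Sg N z {1..m} \<kappa>)\<bar> powr r)) powr (1/r)"
proof (induction m arbitrary: z)
  case 0
  have "U z {} (\<lambda>_. undefined) = z" "Sg N z {} (\<lambda>_. undefined) = z" unfolding U_def Sg_def by auto
  moreover have "(\<bar>T z\<bar> powr r) powr (1/r) = \<bar>T z\<bar>" using r1 by (simp add: powr_powr)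
  ultimately show ?case by (simp add: Av_empty)
next
  case (Suc m)
  define a where "a = Suc m"
  define K where "K = {1..m}"
  have K': "{1..Suc m} = insert a K" unfolding a_def K_def by auto
  have aK: "a \<notin> K" and fK: "finite K" unfolding a_def K_def by auto
  have aM: "a < M" using Suc.prems unfolding a_def by simp
  have KM: "K \<subseteq> {..<M}" and K'M: "insert a K \<subseteq> {..<M}" using Suc.prems unfolding K_def a_def by auto
  have C1: "1 \<le> C" using KH_ge1[OF KH] r1 by simp
  have z: "z \<in> mdom M ps" by (rule Suc.prems)
  define zy where "zy y = z(a := unit_vec y)" for y
  have zy: "zy y \<in> mdom M ps" for y unfolding zy_def by (rule mdom_upd[OF z aM fs_Xspace[OF fs_unit]])
  define Ay where "Ay y = Av N K (\<lambda>\<kappa>. \<bar>T (Sg N (zy y) K \<kappa>)\<bar> powr r)" for y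
  have Ay0: "0 \<le> Ay y" for y unfolding Ay_def by (rule Av_nonneg) simp
  define G where "G \<kappa> = \<bar>T (Sg N z (insert a K) \<kappa>)\<bar> powr r" for \<kappa>
  define AvG where "AvG = Av N (insert a K) G"
  have AvG0: "0 \<le> AvG" unfolding AvG_def G_def by (rule Av_nonneg) simp
  define L where "L = (\<Sum>j\<in>PiE (insert a K) (\<lambda>_. {..<N}). (T (U z (insert a K) j))^2)"
  have L0: "0 \<le> L" unfolding L_def by (simp add: sum_nonneg)
  have Lsplit: "L = (\<Sum>y<N. \<Sum>g\<in>PiE K (\<lambda>_. {..<N}). (T (U (zy y) K g))^2)"
    unfolding L_def zy_def by (subst sum_PiE_insert) (use aK fK U_insert[OF aK] in auto)
  have sq: "(\<Sum>g\<in>PiE K (\<lambda>_. {..<N}). (T (U (zy y) K g))^2) \<le> C^(2*m) * Ay y powr (2/r)" for y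
  proof -
    have ih: "sqrt (\<Sum>g\<in>PiE K (\<lambda>_. {..<N}). (T (U (zy y) K g))^2) \<le> C^m * Ay y powr (1/r)"
      using Suc.IH[of "zy y"] Suc.prems zy unfolding K_def Ay_def by simp
    have "(\<Sum>g\<in>PiE K (\<lambda>_. {..<N}). (T (U (zy y) K g))^2)
        = (sqrt (\<Sum>g\<in>PiE K (\<lambda>_. {..<N}). (T (U (zy y) K g))^2))^2" by (simp add: sum_nonneg)
    also have "\<dots> \<le> (C^m * Ay y powr (1/r))^2" using ih by (intro power_mono) (auto simp: sum_nonneg)
    also have "\<dots> = (C^m)^2 * (Ay y powr (1/r))^2" by (rule power_mult_distrib)
    also have "(C^m)^2 = C^(2*m)" by (simp flip: power_mult add: mult.commute)
    also have "(Ay y powr (1/r))^2 = Ay y powr (2/r)" using Ay0[of y] by (simp add: powr_sq)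
    finally show ?thesis .
  qed
  have Lb: "L \<le> C^(2*m) * (\<Sum>y<N. Ay y powr (2/r))"
    unfolding Lsplit sum_distrib_left by (rule sum_mono) (rule sq)
  define s where "s = 2 / r"
  have s1: "1 \<le> s" unfolding s_def using r1 r2 by (simp add: field_simps)
  define P where "P = PiE K (\<lambda>_. {..<(2::nat)^N})"
  define w :: real where "w = 1 / (2^N)^(card K)"
  have w0: "0 \<le> w" unfolding w_def by simp
  define g where "g y \<kappa> = \<bar>T (Sg N (zy y) K \<kappa>)\<bar> powr r" for y \<kappa>
  have Ayw: "Ay y = (\<Sum>\<kappa>\<in>P. w * g y \<kappa>)" for y
    unfolding Ay_def Av_def P_def w_def g_def by (simp add: sum_divide_distrib)
  have fP: "finite P" unfolding P_def using fK by (intro finite_PiE) auto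
  have mink: "nrm s {..<N} (\<lambda>y. \<Sum>\<kappa>\<in>P. w * g y \<kappa>) \<le> (\<Sum>\<kappa>\<in>P. w * nrm s {..<N} (\<lambda>y. g y \<kappa>))"
    by (rule minkowski_sum[OF _ fP s1]) (auto simp: g_def w0)
  define X where "X \<kappa> = Sg N z K \<kappa>" for \<kappa>
  have X: "X \<kappa> \<in> mdom M ps" for \<kappa> unfolding X_def by (rule Sg_mdom[OF z KM])
  define H where "H \<kappa> = (\<Sum>k<2^N. G (\<kappa>(a := k))) / 2^N" for \<kappa>
  have inner: "nrm s {..<N} (\<lambda>y. g y \<kappa>) \<le> C powr r * H \<kappa>" for \<kappa>
  proof -
    define ay where "ay y = T ((X \<kappa>)(a := unit_vec y))" for y
    have gy: "g y \<kappa> = \<bar>ay y\<bar> powr r" for y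
      unfolding g_def ay_def X_def zy_def using Sg_upd[OF aK] by simp
    have "nrm s {..<N} (\<lambda>y. g y \<kappa>) = (\<Sum>y<N. (\<bar>ay y\<bar> powr r) powr s) powr (1/s)"
      unfolding nrm_def gy ..
    also have "(\<lambda>y. (\<bar>ay y\<bar> powr r) powr s) = (\<lambda>y. (ay y)^2)"
      using r1 unfolding s_def by (simp add: powr_powr abs_powr2)
    also have "1/s = r/2" unfolding s_def by simp
    finally have n1: "nrm s {..<N} (\<lambda>y. g y \<kappa>) = (\<Sum>y<N. (ay y)^2) powr (r/2)" .
    have kh: "sqrt (\<Sum>y<N. (ay y)^2) \<le> C * (Ev N (\<lambda>s. \<bar>\<Sum>y<N. ay y * s y\<bar> powr r)) powr (1/r)"
      using KH unfolding KH_def by blast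
    have lin: "(\<Sum>y<N. ay y * sv N k y) = T (Sg N z (insert a K) (\<kappa>(a := k)))" for k
    proof -
      have "(\<Sum>y<N. ay y * sv N k y) = (\<Sum>y<N. sv N k y * T ((X \<kappa>)(a := unit_vec y)))"
        unfolding ay_def by (simp add: mult.commute)
      also have "\<dots> = T ((X \<kappa>)(a := (\<lambda>n. \<Sum>y<N. sv N k y * unit_vec y n)))"
        by (rule lin_sum[OF X aM, symmetric]) (auto simp: fs_unit)
      also have "\<dots> = T (Sg N z (insert a K) (\<kappa>(a := k)))"
        unfolding sv_expand X_def Sg_insert[OF aK] ..
      finally show ?thesis .
    qed
    have EvH: "Ev N (\<lambda>s. \<bar>\<Sum>y<N. ay y * s y\<bar> powr r) = H \<kappa>"
      unfolding Ev_def H_def G_def lin ..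
    have H0: "0 \<le> H \<kappa>" unfolding H_def G_def by (simp add: sum_nonneg)
    have "(\<Sum>y<N. (ay y)^2) powr (r/2) = (sqrt (\<Sum>y<N. (ay y)^2)) powr r"
      by (simp add: sum_nonneg powr_half_sqrt[symmetric] powr_powr)
    also have "\<dots> \<le> (C * H \<kappa> powr (1/r)) powr r"
      using kh r1 unfolding EvH by (intro powr_mono2) (auto simp: sum_nonneg)
    also have "\<dots> = C powr r * H \<kappa>"
      using r1 C1 H0 by (simp add: powr_mult powr_powr)
    finally show ?thesis unfolding n1 .
  qed
  have "(\<Sum>\<kappa>\<in>P. w * nrm s {..<N} (\<lambda>y. g y \<kappa>)) \<le> (\<Sum>\<kappa>\<in>P. w * (C powr r * H \<kappa>))"
    using inner w0 by (intro sum_mono mult_left_mono) auto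
  also have "\<dots> = C powr r * AvG"
  proof -
    have "(\<Sum>\<kappa>\<in>P. w * (C powr r * H \<kappa>)) = C powr r * Av N K H"
      unfolding Av_def P_def w_def by (simp add: sum_distrib_left sum_divide_distrib mult_ac)
    also have "Av N K H = AvG" unfolding AvG_def H_def using Av_insert[OF aK fK, of N G] by simp
    finally show ?thesis .
  qed
  finally have nb: "nrm s {..<N} (\<lambda>y. Ay y) \<le> C powr r * AvG" using mink unfolding Ayw by simp
  have "(\<Sum>y<N. Ay y powr s) = nrm s {..<N} (\<lambda>y. Ay y) powr s"
    using nrm_pow[of "{..<N}" s "\<lambda>y. Ay y"] s1 Ay0 by simp
  also have "\<dots> \<le> (C powr r * AvG) powr s" using nb s1 by (intro powr_mono2) (auto simp: nrm_nonneg)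
  also have "\<dots> = C^2 * AvG powr s"
  proof -
    have "(C powr r * AvG) powr s = (C powr r) powr s * AvG powr s" by (rule powr_mult)
    also have "(C powr r) powr s = C powr 2" using r1 unfolding s_def by (simp add: powr_powr)
    also have "C powr 2 = C^2" using C1 by (simp add: powr_numeral)
    finally show ?thesis .
  qed
  finally have ys: "(\<Sum>y<N. Ay y powr (2/r)) \<le> C^2 * AvG powr (2/r)" unfolding s_def .
  have "L \<le> C^(2*m) * (C^2 * AvG powr (2/r))"
    using Lb ys C1 by (meson order.trans mult_left_mono zero_le_power order.trans zero_le_one)
  also have "\<dots> = (C^(Suc m) * AvG powr (1/r))^2"
  proof -
    have e1: "(C^(Suc m))^2 = (C^m)^2 * C^2" by (simp add: power_mult_distrib mult.commute)
    have e2: "(C^m)^2 = C^(2*m)" by (simp flip: power_mult add: mult.commute)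
    have e3: "(AvG powr (1/r))^2 = AvG powr (2/r)" using AvG0 by (simp add: powr_sq)
    have "(C^(Suc m) * AvG powr (1/r))^2 = (C^(Suc m))^2 * (AvG powr (1/r))^2" by (rule power_mult_distrib)
    also have "\<dots> = C^(2*m) * (C^2 * AvG powr (2/r))" unfolding e1 e2 e3 by (simp only: mult.assoc)
    finally show ?thesis by simp
  qed
  finally have "L \<le> (C^(Suc m) * AvG powr (1/r))^2" .
  then have "sqrt L \<le> C^(Suc m) * AvG powr (1/r)"
    using C1 by (intro real_le_lsqrt) auto
  then show ?case unfolding L_def AvG_def G_def K' .
qed

end

lemma finite_in_box:
  assumes fF: "finite F" and fA: "finite A" and sub: "F \<subseteq> PiE A (\<lambda>_. UNIV :: nat set)"
  shows "\<exists>N. F \<subseteq> PiE A (\<lambda>_. {..<N})"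
proof -
  define N where "N = Suc (\<Sum>j\<in>F. \<Sum>k\<in>A. j k)"
  have "F \<subseteq> PiE A (\<lambda>_. {..<N})"
  proof
    fix j assume j: "j \<in> F"
    have "\<forall>k\<in>A. j k < N"
    proof
      fix k assume k: "k \<in> A"
      have "j k \<le> (\<Sum>k\<in>A. j k)" using member_le_sum[OF k, of j] fA by simp
      also have "\<dots> \<le> (\<Sum>j\<in>F. \<Sum>k\<in>A. j k)" using member_le_sum[OF j, of "\<lambda>j. \<Sum>k\<in>A. j k"] fF by simp
      finally show "j k < N" unfolding N_def by simp
    qed
    moreover have "j \<in> extensional A" using sub j by (auto simp: PiE_iff)
    ultimately show "j \<in> PiE A (\<lambda>_. {..<N})" by (auto simp: PiE_iff)
  qed
  then show ?thesis by blast
qed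

lemma box_mono: "N \<le> N' \<Longrightarrow> PiE A (\<lambda>_. {..<N}) \<subseteq> PiE A (\<lambda>_. {..<N'::nat})"
  by (rule PiE_mono) auto

lemma ennpowr_ennreal: "0 \<le> v \<Longrightarrow> ennpowr (ennreal v) e = ennreal (v powr e)"
  unfolding ennpowr_def by simp

context setting begin

lemma r_bounds: "1 \<le> conj_exp p \<and> conj_exp p \<le> 2"
  using conj_exp_cases
proof
  assume "p = \<infinity> \<and> conj_exp p = 1"
  then have "conj_exp p = 1" by (rule conjunct2)
  then show ?thesis by simp
next
  assume A: "p \<noteq> \<infinity> \<and> 2 \<le> real_of_ereal p \<and> conj_exp p = real_of_ereal p / (real_of_ereal p - 1)"
  define P where "P = real_of_ereal p"
  have P2: "2 \<le> P" and e: "conj_exp p = P / (P - 1)" using A unfolding P_def by auto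
  have "1 \<le> P / (P - 1)" using P2 by (simp add: field_simps)
  moreover have "P / (P - 1) \<le> 2" using P2 by (simp add: field_simps)
  ultimately show ?thesis unfolding e by simp
qed

lemma finite_bound:
  assumes KH: "KH C (conj_exp p)"
  shows "(\<Sum>i1<N. (\<Sum>j\<in>PiE {1..<M} (\<lambda>_. {..<N}). (eval_units M T (j(0 := i1)))^2) powr (conj_exp p / 2))
     \<le> (C^(M-1) * form_norm M ps T) powr conj_exp p"
proof -
  define r where "r = conj_exp p"
  have r1: "1 \<le> r" and r2: "r \<le> 2" using r_bounds unfolding r_def by auto
  define FN where "FN = form_norm M ps T"
  have FN0: "0 \<le> FN" unfolding FN_def by (rule form_norm_nonneg)
  have C1: "1 \<le> C" using KH_ge1[OF KH] r1 unfolding r_def by simp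
  define K where "K = {1..M-1}"
  have K: "{1..<M} = K" unfolding K_def using M1 by auto
  have K0: "0 \<notin> K" and KM: "K \<subseteq> {..<M}" and fK: "finite K" unfolding K_def using M1 by auto
  define z0 :: "nat \<Rightarrow> nat \<Rightarrow> real" where "z0 = (\<lambda>k n. 0)"
  have z0: "z0 \<in> mdom M ps" unfolding z0_def by (rule zero_mdom)
  define zi where "zi i1 = z0(0 := unit_vec i1)" for i1
  have zi: "zi i1 \<in> mdom M ps" for i1 unfolding zi_def using M1 by (intro mdom_upd[OF z0] fs_Xspace[OF fs_unit]) auto
  have ev: "eval_units M T (j(0 := i1)) = T (U (zi i1) K j)" for j i1
  proof -
    have "(\<lambda>k. if k < M then unit_vec ((j(0 := i1)) k) else (\<lambda>_. 0)) = U (zi i1) K j"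
      unfolding U_def zi_def z0_def K_def using M1 by (auto simp: fun_eq_iff)
    then show ?thesis unfolding eval_units_def by simp
  qed
  define A where "A i1 = Av N K (\<lambda>\<kappa>. \<bar>T (Sg N (zi i1) K \<kappa>)\<bar> powr r)" for i1
  have A0: "0 \<le> A i1" for i1 unfolding A_def by (rule Av_nonneg) simp
  have step: "(\<Sum>j\<in>PiE K (\<lambda>_. {..<N}). (T (U (zi i1) K j))^2) powr (r/2) \<le> (C^(M-1)) powr r * A i1" for i1
  proof -
    have mk: "sqrt (\<Sum>j\<in>PiE K (\<lambda>_. {..<N}). (T (U (zi i1) K j))^2) \<le> C^(M-1) * A i1 powr (1/r)"
      using multi_kh[OF KH[folded r_def] r1 r2, of "M-1" "zi i1" N] M1 zi unfolding K_def A_def by simp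
    have "(\<Sum>j\<in>PiE K (\<lambda>_. {..<N}). (T (U (zi i1) K j))^2) powr (r/2)
        = (sqrt (\<Sum>j\<in>PiE K (\<lambda>_. {..<N}). (T (U (zi i1) K j))^2)) powr r"
      by (simp add: sum_nonneg powr_half_sqrt[symmetric] powr_powr)
    also have "\<dots> \<le> (C^(M-1) * A i1 powr (1/r)) powr r"
      using mk r1 by (intro powr_mono2) (auto simp: sum_nonneg)
    also have "\<dots> = (C^(M-1)) powr r * A i1"
      using r1 A0[of i1] by (simp add: powr_mult powr_powr)
    finally show ?thesis .
  qed
  have "(\<Sum>i1<N. (\<Sum>j\<in>PiE K (\<lambda>_. {..<N}). (T (U (zi i1) K j))^2) powr (r/2))
      \<le> (\<Sum>i1<N. (C^(M-1)) powr r * A i1)"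
    by (rule sum_mono) (rule step)
  also have "\<dots> = (C^(M-1)) powr r * (\<Sum>i1<N. A i1)" by (simp add: sum_distrib_left)
  also have "(\<Sum>i1<N. A i1) \<le> FN powr r"
  proof -
    have "(\<Sum>i1<N. A i1) = Av N K (\<lambda>\<kappa>. \<Sum>i1<N. \<bar>T ((Sg N z0 K \<kappa>)(0 := unit_vec i1))\<bar> powr r)"
      unfolding A_def Av_sum zi_def Sg_upd[OF K0] ..
    also have "\<dots> \<le> Av N K (\<lambda>_. FN powr r)"
    proof (rule Av_mono)
      fix \<kappa>
      have x: "Sg N z0 K \<kappa> \<in> mdom M ps" by (rule Sg_mdom[OF z0 KM])
      have xs: "\<forall>k<M. k \<noteq> 0 \<longrightarrow> Xnorm (ps k) (Sg N z0 K \<kappa> k) \<le> 1"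
      proof (intro allI impI)
        fix k assume k: "k < M" "k \<noteq> 0"
        then have "k \<in> K" unfolding K_def by auto
        then have "Sg N z0 K \<kappa> k = sv N (\<kappa> k)" unfolding Sg_def by simp
        moreover have "Xnorm \<infinity> (sv N (\<kappa> k)) \<le> 1" by (rule Xnorm_inf_le) (rule sv_abs)
        ultimately show "Xnorm (ps k) (Sg N z0 K \<kappa> k) \<le> 1" using k by simp
      qed
      show "(\<Sum>i1<N. \<bar>T ((Sg N z0 K \<kappa>)(0 := unit_vec i1))\<bar> powr r) \<le> FN powr r"
        using dual[OF x xs, of N] unfolding r_def FN_def .
    qed
    also have "\<dots> = FN powr r" by (rule Av_const[OF fK])
    finally show ?thesis .
  qed
  then have "(C^(M-1)) powr r * (\<Sum>i1<N. A i1) \<le> (C^(M-1)) powr r * FN powr r"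
    by (rule mult_left_mono) simp
  also have "\<dots> = (C^(M-1) * FN) powr r" by (rule powr_mult[symmetric])
  finally show ?thesis unfolding K ev r_def FN_def by simp
qed

end

context setting begin

lemma mixed_le:
  assumes KH: "KH C (conj_exp p)"
  shows "mixed_sum M (conj_exp p) T \<le> ennreal (C^(M-1) * form_norm M ps T)"
proof -
  define r where "r = conj_exp p"
  have r1: "1 \<le> r" and r2: "r \<le> 2" using r_bounds unfolding r_def by auto
  have r0: "0 < r" using r1 by simp
  define B where "B = C^(M-1) * form_norm M ps T"
  have C1: "1 \<le> C" using KH_ge1[OF KH] r1 unfolding r_def by simp
  have B0: "0 \<le> B" unfolding B_def using C1 form_norm_nonneg by simp
  define PA where "PA = PiE {1..<M} (\<lambda>_. UNIV :: nat set)"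
  define box where "box N = PiE {1..<M} (\<lambda>_. {..<N::nat})" for N
  define a where "a i1 j = (eval_units M T (j(0 := i1)))^2" for i1 j
  have a0: "0 \<le> a i1 j" for i1 j unfolding a_def by simp
  define Sm where "Sm N i1 = (\<Sum>j\<in>box N. a i1 j)" for N i1
  have Sm0: "0 \<le> Sm N i1" for N i1 unfolding Sm_def using a0 by (simp add: sum_nonneg)
  have fbox: "finite (box N)" for N unfolding box_def by (intro finite_PiE) auto
  have boxP: "box N \<subseteq> PA" for N unfolding box_def PA_def by (rule PiE_mono) auto
  have fb: "(\<Sum>i1<N. Sm N i1 powr (r/2)) \<le> B powr r" for N
    using finite_bound[OF KH, of N] unfolding Sm_def box_def a_def r_def B_def .
  have Smono: "Sm N i1 \<le> Sm N' i1" if "N \<le> N'" for N N' i1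
    unfolding Sm_def box_def by (intro sum_mono2 box_mono[OF that]) (use fbox[of N'] a0 in \<open>auto simp: box_def\<close>)
  have Sbnd: "Sm N i1 \<le> B^2" for N i1
  proof -
    define N' where "N' = max N (Suc i1)"
    have "Sm N i1 \<le> Sm N' i1" unfolding N'_def by (rule Smono) simp
    have i1: "i1 \<in> {..<N'}" unfolding N'_def by simp
    have "Sm N' i1 powr (r/2) \<le> (\<Sum>i<N'. Sm N' i powr (r/2))"
      by (rule member_le_sum[OF i1]) auto
    also have "\<dots> \<le> B powr r" by (rule fb)
    finally have h: "Sm N' i1 powr (r/2) \<le> B powr r" .
    have "Sm N' i1 = (Sm N' i1 powr (r/2)) powr (2/r)" using Sm0[of N' i1] r0 by (simp add: powr_powr)
    also have "\<dots> \<le> (B powr r) powr (2/r)" using h r0 by (intro powr_mono2) auto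
    also have "\<dots> = B^2" using r0 B0 by (simp add: powr_powr powr_numeral)
    finally show ?thesis using \<open>Sm N i1 \<le> Sm N' i1\<close> by simp
  qed
  define I where "I i1 = (\<Sum>\<^sub>\<infinity> j\<in>PA. ennreal (a i1 j))" for i1
  have Ieq: "I i1 = (SUP N. ennreal (Sm N i1))" for i1
  proof (rule antisym)
    show "I i1 \<le> (SUP N. ennreal (Sm N i1))" unfolding I_def
    proof (rule infsum_le_finite_sums)
      show "(\<lambda>j. ennreal (a i1 j)) summable_on PA" by (rule nonneg_summable_on_complete) simp
      fix F assume F: "finite F" "F \<subseteq> PA"
      obtain N where N: "F \<subseteq> box N" using finite_in_box[OF F(1) _ F(2)[unfolded PA_def]] unfolding box_def by auto
      then have "(\<Sum>j\<in>F. ennreal (a i1 j)) \<le> (\<Sum>j\<in>box N. ennreal (a i1 j))" by (intro sum_mono2 fbox) auto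
      also have "\<dots> = ennreal (Sm N i1)" unfolding Sm_def using a0 by simp
      also have "\<dots> \<le> (SUP N. ennreal (Sm N i1))" by (rule SUP_upper) simp
      finally show "(\<Sum>j\<in>F. ennreal (a i1 j)) \<le> (SUP N. ennreal (Sm N i1))" .
    qed
    show "(SUP N. ennreal (Sm N i1)) \<le> I i1"
    proof (rule SUP_least)
      fix N
      have "I i1 = (SUP F\<in>{F. finite F \<and> F \<subseteq> PA}. \<Sum>j\<in>F. ennreal (a i1 j))" unfolding I_def
        by (rule nonneg_infsum_complete) simp
      moreover have "(\<Sum>j\<in>box N. ennreal (a i1 j)) \<le> (SUP F\<in>{F. finite F \<and> F \<subseteq> PA}. \<Sum>j\<in>F. ennreal (a i1 j))"
        by (rule SUP_upper) (use fbox boxP in auto)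
      ultimately show "ennreal (Sm N i1) \<le> I i1" unfolding Sm_def using a0 by simp
    qed
  qed
  have Itop: "I i1 \<le> ennreal (B^2)" for i1 unfolding Ieq by (rule SUP_least) (simp add: Sbnd ennreal_leI)
  define v where "v i1 = enn2real (I i1)" for i1
  have v0: "0 \<le> v i1" for i1 unfolding v_def by simp
  have Iv: "I i1 = ennreal (v i1)" for i1
  proof -
    have "I i1 < top" using Itop[of i1] by (rule le_less_trans) simp
    then show ?thesis unfolding v_def by simp
  qed
  have lim: "(\<lambda>N. Sm N i1) \<longlonglongrightarrow> v i1" for i1
  proof -
    have inc: "incseq (\<lambda>N. ennreal (Sm N i1))" unfolding incseq_def by (auto intro!: ennreal_leI Smono)
    have "(\<lambda>N. ennreal (Sm N i1)) \<longlonglongrightarrow> (SUP N. ennreal (Sm N i1))" by (rule LIMSEQ_SUP[OF inc])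
    then have "(\<lambda>N. ennreal (Sm N i1)) \<longlonglongrightarrow> ennreal (v i1)" using Ieq[of i1] Iv[of i1] by simp
    then show ?thesis by (rule tendsto_ennrealD) (use Sm0 v0 in auto)
  qed
  have vb: "(\<Sum>i1<N0. v i1 powr (r/2)) \<le> B powr r" for N0
  proof (rule LIMSEQ_le_const2)
    show "(\<lambda>N. \<Sum>i1<N0. Sm N i1 powr (r/2)) \<longlonglongrightarrow> (\<Sum>i1<N0. v i1 powr (r/2))"
      using r0 by (intro tendsto_sum tendsto_powr' lim tendsto_const) (auto simp: Sm0)
    show "\<exists>N. \<forall>n\<ge>N. (\<Sum>i1<N0. Sm n i1 powr (r/2)) \<le> B powr r"
    proof (intro exI allI impI)
      fix n assume "N0 \<le> n"
      then have "(\<Sum>i1<N0. Sm n i1 powr (r/2)) \<le> (\<Sum>i1<n. Sm n i1 powr (r/2))" by (intro sum_mono2) auto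
      also have "\<dots> \<le> B powr r" by (rule fb)
      finally show "(\<Sum>i1<N0. Sm n i1 powr (r/2)) \<le> B powr r" .
    qed
  qed
  define Ot where "Ot = (\<Sum>\<^sub>\<infinity> i1\<in>(UNIV::nat set). ennpowr (I i1) (r/2))"
  have Ob: "Ot \<le> ennreal (B powr r)" unfolding Ot_def
  proof (rule infsum_le_finite_sums)
    show "(\<lambda>i1. ennpowr (I i1) (r/2)) summable_on UNIV" by (rule nonneg_summable_on_complete) simp
    fix F :: "nat set" assume F: "finite F" "F \<subseteq> UNIV"
    define N0 where "N0 = Suc (\<Sum>F)"
    have FN: "F \<subseteq> {..<N0}"
    proof
      fix i assume "i \<in> F"
      then have "i \<le> \<Sum>F" using member_le_sum[of i F "\<lambda>x. x"] F(1) by simp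
      then show "i \<in> {..<N0}" unfolding N0_def by simp
    qed
    have "(\<Sum>i1\<in>F. ennpowr (I i1) (r/2)) \<le> (\<Sum>i1<N0. ennpowr (I i1) (r/2))"
      by (intro sum_mono2) (use FN in auto)
    also have "\<dots> = (\<Sum>i1<N0. ennreal (v i1 powr (r/2)))" unfolding Iv using v0 by (simp add: ennpowr_ennreal)
    also have "\<dots> = ennreal (\<Sum>i1<N0. v i1 powr (r/2))" by simp
    also have "\<dots> \<le> ennreal (B powr r)" by (intro ennreal_leI vb)
    finally show "(\<Sum>i1\<in>F. ennpowr (I i1) (r/2)) \<le> ennreal (B powr r)" .
  qed
  have ms: "mixed_sum M r T = ennpowr Ot (1/r)" unfolding mixed_sum_def Ot_def I_def a_def PA_def ..
  have Otop: "Ot \<noteq> top" using Ob by (metis ennreal_neq_top neq_top_trans)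
  have "enn2real Ot \<le> B powr r" by (rule enn2real_leI[OF _ Ob]) simp
  then have "enn2real Ot powr (1/r) \<le> (B powr r) powr (1/r)" using r0 by (intro powr_mono2) auto
  also have "\<dots> = B" using r0 B0 by (simp add: powr_powr)
  finally have "ennpowr Ot (1/r) \<le> ennreal B" unfolding ennpowr_def using Otop by (simp add: ennreal_leI)
  then show ?thesis unfolding ms[unfolded r_def] B_def r_def .
qed

theorem main: "mixed_sum M (conj_exp p) T \<le> ennreal (khintchine_A (conj_exp p) ^ (M - 1) * form_norm M ps T)"
proof -
  define r where "r = conj_exp p"
  have r1: "1 \<le> r" using r_bounds unfolding r_def by auto
  define S where "S = {C. KH C r}"
  define FN where "FN = form_norm M ps T"
  have FN0: "0 \<le> FN" unfolding FN_def by (rule form_norm_nonneg)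
  have s3: "sqrt 3 \<in> S" unfolding S_def using KH_sqrt3[OF r1] by simp
  then have Sne: "S \<noteq> {}" by blast
  have S1: "\<And>C. C \<in> S \<Longrightarrow> 1 \<le> C" unfolding S_def using KH_ge1 r1 by auto
  have bdd: "bdd_below S" unfolding bdd_below_def using S1 by blast
  have A: "khintchine_A r = Inf S" unfolding S_def by (rule khA_eq)
  have I1: "1 \<le> Inf S" using Sne S1 by (intro cInf_greatest) auto
  have le: "mixed_sum M r T \<le> ennreal (C^(M-1) * FN)" if "C \<in> S" for C
    using mixed_le[of C] that unfolding S_def r_def FN_def by simp
  have "mixed_sum M r T < top" using le[OF s3] by (rule le_less_trans) simp
  define m where "m = enn2real (mixed_sum M r T)"
  have mm: "mixed_sum M r T = ennreal m" unfolding m_def using \<open>mixed_sum M r T < top\<close> by simp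
  have m0: "0 \<le> m" unfolding m_def by simp
  have mC: "m \<le> C^(M-1) * FN" if "C \<in> S" for C
  proof -
    have "ennreal m \<le> ennreal (C^(M-1) * FN)" using le[OF that] unfolding mm .
    then show ?thesis using S1[OF that] FN0 by (simp add: ennreal_le_iff)
  qed
  have "m \<le> (Inf S)^(M-1) * FN"
  proof (rule LIMSEQ_le_const)
    show "(\<lambda>n. (Inf S + inverse (real (Suc n)))^(M-1) * FN) \<longlonglongrightarrow> (Inf S)^(M-1) * FN"
    proof -
      have "(\<lambda>n. (Inf S + inverse (real (Suc n)))^(M-1) * FN) \<longlonglongrightarrow> (Inf S + 0)^(M-1) * FN"
        by (intro tendsto_intros LIMSEQ_inverse_real_of_nat)
      then show ?thesis by simp
    qed
    show "\<exists>N. \<forall>n\<ge>N. m \<le> (Inf S + inverse (real (Suc n)))^(M-1) * FN"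
    proof (intro exI allI impI)
      fix n :: nat
      have "Inf S < Inf S + inverse (real (Suc n))" by simp
      then obtain C where C: "C \<in> S" "C < Inf S + inverse (real (Suc n))" using cInf_lessD[OF Sne] by blast
      have "C^(M-1) \<le> (Inf S + inverse (real (Suc n)))^(M-1)"
        using C S1[OF C(1)] by (intro power_mono) auto
      then have "C^(M-1) * FN \<le> (Inf S + inverse (real (Suc n)))^(M-1) * FN"
        using FN0 by (rule mult_right_mono)
      with mC[OF C(1)] show "m \<le> (Inf S + inverse (real (Suc n)))^(M-1) * FN" by linarith
    qed
  qed
  then have "mixed_sum M r T \<le> ennreal ((Inf S)^(M-1) * FN)" unfolding mm by (rule ennreal_leI)
  then show ?thesis unfolding A[symmetric] r_def FN_def .
qed

end

theorem theorem4p1: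
  fixes M :: nat and p :: ereal and T :: "(nat \<Rightarrow> nat \<Rightarrow> real) \<Rightarrow> real"
  defines "ps \<equiv> (\<lambda>k::nat. if k = 0 then p else \<infinity>)"
  assumes "M \<ge> 3" and "2 \<le> p"
    and "multilinear_form M ps T" and "continuous_form M ps T"
  shows "mixed_sum M (conj_exp p) T
           \<le> ennreal (khintchine_A (conj_exp p) ^ (M - 1) * form_norm M ps T)"
proof -
  have ml: "multilinear_form M (\<lambda>k::nat. if k = 0 then p else \<infinity>) T" using assms(4) unfolding ps_def .
  have ct: "continuous_form M (\<lambda>k::nat. if k = 0 then p else \<infinity>) T" using assms(5) unfolding ps_def .
  have M1: "1 \<le> M" using assms(2) by simp
  interpret setting M p T
    by (rule setting.intro[OF M1 assms(3) ml ct])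
  show ?thesis unfolding ps_def by (rule main)
qed

end
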